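(* Let $q=2^r$ ($r\ge 1$), $\sigma\in\mathrm{Aut}(\mathbb{F}_q)$, and $R=\mathbb{F}_q[X;\sigma]/(X^2)$. Then there is no projective $\bigl((q^4-q)/2,\,q^2/2\bigr)$-arc in $\mathrm{PHG}(2,R)$; equivalently, $\mathrm{m}_{q^2/2}(R)<(q^4-q)/2$.
   Context: $\mathbb{F}_q[X;\sigma]$ is the skew polynomial ring with commutation rule $Xa=\sigma(a)X$; $R=\mathbb{F}_q[X;\sigma]/(X^2)$ is a chain ring of length $2$ and characteristic $2$ with residue field $\mathbb{F}_q$. The projective Hjelmslev plane $\mathrm{PHG}(2,R)$ is the incidence structure whose points are the free rank-$1$ submodules of the right module $R_R^3$, whose lines are the free rank-$2$ submodules of $R_R^3$, with incidence given by inclusion. A projective $(k,n)$-arc is a set of $k$ points meeting every line in at most $n$ points. For $0\le n\le q^2+q$, $\mathrm{m}_n(R)$ denotes the largest $k$ such that a projective $(k,n)$-arc exists in $\mathrm{PHG}(2,R)$. *)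

theory Defs
  imports Main
begin

definition field_aut :: "('a::field \<Rightarrow> 'a) \<Rightarrow> bool" where
  "field_aut \<sigma> \<longleftrightarrow> bij \<sigma> \<and> (\<forall>x y. \<sigma> (x + y) = \<sigma> x + \<sigma> y)
      \<and> (\<forall>x y. \<sigma> (x * y) = \<sigma> x * \<sigma> y)"

text \<open>Elements of R = F_q[X;sigma]/(X^2): the pair (a,b) stands for a + bX.
  Multiplication: (a + bX)(c + dX) = ac + (ad + b sigma(c)) X, since X c = sigma(c) X and X^2 = 0.\<close>
type_synonym 'a skr = "'a \<times> 'a"

definition skadd :: "'a::field skr \<Rightarrow> 'a skr \<Rightarrow> 'a skr" where
  "skadd x y = (fst x + fst y, snd x + snd y)"

definition skmul :: "('a::field \<Rightarrow> 'a) \<Rightarrow> 'a skr \<Rightarrow> 'a skr \<Rightarrow> 'a skr" where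
  "skmul \<sigma> x y = (fst x * fst y, fst x * snd y + snd x * \<sigma> (fst y))"

type_synonym 'a vec3 = "'a skr \<times> 'a skr \<times> 'a skr"

definition vadd :: "'a::field vec3 \<Rightarrow> 'a vec3 \<Rightarrow> 'a vec3" where
  "vadd u v = (skadd (fst u) (fst v), skadd (fst (snd u)) (fst (snd v)),
               skadd (snd (snd u)) (snd (snd v)))"

definition vscale :: "('a::field \<Rightarrow> 'a) \<Rightarrow> 'a vec3 \<Rightarrow> 'a skr \<Rightarrow> 'a vec3" where
  "vscale \<sigma> v c = (skmul \<sigma> (fst v) c, skmul \<sigma> (fst (snd v)) c, skmul \<sigma> (snd (snd v)) c)"

text \<open>Points of PHG(2,R): free rank-1 submodules of R_R^3, i.e. submodules v R with
  basis {v} (the map c \<mapsto> v c injective).\<close>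
definition phg_point :: "('a::field \<Rightarrow> 'a) \<Rightarrow> 'a vec3 set \<Rightarrow> bool" where
  "phg_point \<sigma> P \<longleftrightarrow> (\<exists>v. inj (vscale \<sigma> v) \<and> P = range (vscale \<sigma> v))"

text \<open>Lines of PHG(2,R): free rank-2 submodules u R + w R with basis {u, w}.\<close>
definition phg_line :: "('a::field \<Rightarrow> 'a) \<Rightarrow> 'a vec3 set \<Rightarrow> bool" where
  "phg_line \<sigma> L \<longleftrightarrow> (\<exists>u w.
      inj (\<lambda>(c, d). vadd (vscale \<sigma> u c) (vscale \<sigma> w d)) \<and>
      L = range (\<lambda>(c, d). vadd (vscale \<sigma> u c) (vscale \<sigma> w d)))"

definition proj_arc :: "('a::field \<Rightarrow> 'a) \<Rightarrow> 'a vec3 set set \<Rightarrow> nat \<Rightarrow> nat \<Rightarrow> bool" where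
  "proj_arc \<sigma> K k n \<longleftrightarrow> finite K \<and> card K = k \<and> (\<forall>P\<in>K. phg_point \<sigma> P) \<and>
     (\<forall>L. phg_line \<sigma> L \<longrightarrow> card {P \<in> K. P \<subseteq> L} \<le> n)"

end

theory Submission
  imports Defs "HOL-Library.Product_Plus" "HOL-Library.Cardinality"
begin

type_synonym 'a v3 = "'a \<times> 'a \<times> 'a"

definition dot :: "'a::field v3 \<Rightarrow> 'a v3 \<Rightarrow> 'a" where
  "dot x y = fst x * fst y + fst (snd x) * fst (snd y) + snd (snd x) * snd (snd y)"

definition smul :: "'a::field \<Rightarrow> 'a v3 \<Rightarrow> 'a v3" where
  "smul c x = (c * fst x, c * fst (snd x), c * snd (snd x))"

definition sv :: "('a::field \<Rightarrow> 'a) \<Rightarrow> 'a v3 \<Rightarrow> 'a v3" where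
  "sv \<sigma> x = (\<sigma> (fst x), \<sigma> (fst (snd x)), \<sigma> (snd (snd x)))"

definition p0 :: "'a::field vec3 \<Rightarrow> 'a v3" where
  "p0 w = (fst (fst w), fst (fst (snd w)), fst (snd (snd w)))"

definition p1 :: "'a::field vec3 \<Rightarrow> 'a v3" where
  "p1 w = (snd (fst w), snd (fst (snd w)), snd (snd (snd w)))"

definition mk :: "'a::field v3 \<Rightarrow> 'a v3 \<Rightarrow> 'a vec3" where
  "mk x y = ((fst x, fst y), (fst (snd x), fst (snd y)), (snd (snd x), snd (snd y)))"

definition par :: "'a::field v3 \<Rightarrow> 'a v3 \<Rightarrow> bool" where
  "par x y \<longleftrightarrow> (\<exists>c. x = smul c y)"

lemma v3_eq: "(x::'a v3) = y \<longleftrightarrow> fst x = fst y \<and> fst (snd x) = fst (snd y) \<and> snd (snd x) = snd (snd y)"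
  by (simp add: prod_eq_iff)

lemma v3_zero: "(x::'a::zero v3) = 0 \<longleftrightarrow> fst x = 0 \<and> fst (snd x) = 0 \<and> snd (snd x) = 0"
  by (simp add: prod_eq_iff)

lemma mk_p: "mk (p0 w) (p1 w) = w"
  by (simp add: mk_def p0_def p1_def)
lemma p0_mk[simp]: "p0 (mk x y) = x" by (simp add: mk_def p0_def)
lemma p1_mk[simp]: "p1 (mk x y) = y" by (simp add: mk_def p1_def)

lemma vec_eq_p: "(u::'a::field vec3) = w \<longleftrightarrow> p0 u = p0 w \<and> p1 u = p1 w"
  by (metis mk_p)

lemma dot_add_left: "dot (x + y) z = dot x z + dot y z"
  by (simp add: dot_def algebra_simps)
lemma dot_add_right: "dot z (x + y) = dot z x + dot z y"
  by (simp add: dot_def algebra_simps)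
lemma dot_diff_right: "dot z (x - y) = dot z x - dot z y"
  by (simp add: dot_def algebra_simps)
lemma dot_smul_left: "dot (smul c x) z = c * dot x z"
  by (simp add: dot_def smul_def algebra_simps)
lemma dot_smul_right: "dot z (smul c x) = c * dot z x"
  by (simp add: dot_def smul_def algebra_simps)
lemma dot_zero_left[simp]: "dot 0 z = 0" by (simp add: dot_def)
lemma dot_zero_right[simp]: "dot z 0 = 0" by (simp add: dot_def)
lemma dot_comm: "dot x y = dot y x" by (simp add: dot_def algebra_simps)
lemma smul_smul: "smul a (smul b x) = smul (a*b) x" by (simp add: smul_def)
lemma smul_one[simp]: "smul 1 x = x" by (simp add: smul_def)
lemma smul_zero[simp]: "smul 0 x = 0" by (simp add: smul_def prod_eq_iff)
lemma smul_zero2[simp]: "smul c 0 = 0" by (simp add: smul_def prod_eq_iff)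
lemma smul_eq_0: "smul c x = 0 \<longleftrightarrow> c = 0 \<or> x = 0" by (auto simp: smul_def prod_eq_iff)
lemma smul_cancel: "x \<noteq> 0 \<Longrightarrow> smul a x = smul b x \<longleftrightarrow> a = b"
  by (auto simp: smul_def prod_eq_iff)
lemma smul_add: "smul c (x + y) = smul c x + smul c y" by (simp add: smul_def algebra_simps)
lemma smul_add2: "smul (a + b) x = smul a x + smul b x" by (simp add: smul_def algebra_simps)

lemma par_refl: "par x x" unfolding par_def by (metis smul_one)
lemma par_zero[simp]: "par 0 x" unfolding par_def by (metis smul_zero)
lemma par_sym: "x \<noteq> 0 \<Longrightarrow> par x y \<Longrightarrow> par y x"
  unfolding par_def
  by (metis divide_self_if mult.commute nonzero_divide_eq_eq smul_one smul_smul smul_zero)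
lemma par_trans: "par x y \<Longrightarrow> par y z \<Longrightarrow> par x z"
  unfolding par_def by (metis smul_smul)
lemma par_nz: "x \<noteq> 0 \<Longrightarrow> par x y \<Longrightarrow> y \<noteq> 0"
  unfolding par_def by auto

locale faut = fixes \<sigma> :: "'a::field \<Rightarrow> 'a" assumes aut: "field_aut \<sigma>"
begin

lemma s_add: "\<sigma> (x + y) = \<sigma> x + \<sigma> y" using aut unfolding field_aut_def by blast
lemma s_mult: "\<sigma> (x * y) = \<sigma> x * \<sigma> y" using aut unfolding field_aut_def by blast
lemma s_bij: "bij \<sigma>" using aut unfolding field_aut_def by blast
lemma s_inj: "\<sigma> x = \<sigma> y \<longleftrightarrow> x = y" using s_bij by (meson bij_def injD)
lemma s_zero[simp]: "\<sigma> 0 = 0"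
  using s_add[of 0 0] by (metis add_cancel_right_right add_0)
lemma s_one[simp]: "\<sigma> 1 = 1"
proof -
  obtain x where "\<sigma> x = 1" using s_bij by (metis bij_def surjD)
  then show ?thesis using s_mult[of 1 x] by simp
qed
lemma s_eq0[simp]: "\<sigma> x = 0 \<longleftrightarrow> x = 0" using s_inj[of x 0] by simp
lemma s_neg: "\<sigma> (- x) = - \<sigma> x"
proof -
  have "\<sigma> x + \<sigma> (-x) = 0" using s_add[of x "-x"] by simp
  then show ?thesis by (metis minus_unique)
qed
lemma s_diff: "\<sigma> (x - y) = \<sigma> x - \<sigma> y"
  using s_add[of x "-y"] s_neg by simp
lemma s_inv: "\<sigma> (inverse x) = inverse (\<sigma> x)"
proof (cases "x = 0")
  case True then show ?thesis by simp
next
  case False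
  then have "\<sigma> x * \<sigma> (inverse x) = 1" using s_mult[of x "inverse x"] by simp
  then show ?thesis by (metis inverse_unique)
qed

lemma p0_vscale: "p0 (vscale \<sigma> w c) = smul (fst c) (p0 w)"
  by (simp add: p0_def vscale_def skmul_def smul_def mult.commute)
lemma p1_vscale: "p1 (vscale \<sigma> w c) = smul (snd c) (p0 w) + smul (\<sigma> (fst c)) (p1 w)"
  by (simp add: p1_def p0_def vscale_def skmul_def smul_def mult.commute)

lemma vscale_one: "vscale \<sigma> w (1,0) = w"
  by (simp add: vec_eq_p p0_vscale p1_vscale)

lemma vscale_vscale: "vscale \<sigma> (vscale \<sigma> w c) d = vscale \<sigma> w (skmul \<sigma> c d)"
  by (simp add: vec_eq_p p0_vscale p1_vscale skmul_def smul_def s_mult s_add algebra_simps)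

definition cinv :: "'a \<times> 'a \<Rightarrow> 'a \<times> 'a" where
  "cinv c = (inverse (fst c), - (inverse (fst c) * snd c * \<sigma> (inverse (fst c))))"

lemma skmul_cinv: "fst c \<noteq> 0 \<Longrightarrow> skmul \<sigma> c (cinv c) = (1, 0)"
  by (simp add: skmul_def cinv_def)

lemma sv_smul: "sv \<sigma> (smul c x) = smul (\<sigma> c) (sv \<sigma> x)"
  by (simp add: sv_def smul_def s_mult)
lemma sv_zero[simp]: "sv \<sigma> x = 0 \<longleftrightarrow> x = 0"
  by (simp add: sv_def prod_eq_iff)
lemma sv_par: "par (sv \<sigma> x) (sv \<sigma> y) \<longleftrightarrow> par x y"
proof
  assume "par (sv \<sigma> x) (sv \<sigma> y)"
  then obtain c where c: "sv \<sigma> x = smul c (sv \<sigma> y)" unfolding par_def by blast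
  obtain d where d: "\<sigma> d = c" using s_bij by (metis bij_def surjD)
  have "sv \<sigma> x = sv \<sigma> (smul d y)" using c d sv_smul by simp
  then have "x = smul d y" by (simp add: sv_def prod_eq_iff s_inj)
  then show "par x y" unfolding par_def by blast
next
  assume "par x y" then show "par (sv \<sigma> x) (sv \<sigma> y)" unfolding par_def using sv_smul by blast
qed

end

context faut begin

definition Ker :: "'a v3 \<Rightarrow> 'a v3 \<Rightarrow> 'a vec3 set" where
  "Ker a0 a1 = {w. dot a0 (p0 w) = 0 \<and> dot a0 (p1 w) + dot a1 (sv \<sigma> (p0 w)) = 0}"

lemma Ker_vscale: assumes "w \<in> Ker a0 a1" shows "vscale \<sigma> w c \<in> Ker a0 a1"
proof -
  have h0: "dot a0 (p0 w) = 0" and h1: "dot a0 (p1 w) + dot a1 (sv \<sigma> (p0 w)) = 0"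
    using assms unfolding Ker_def by auto
  have e0: "dot a0 (p0 (vscale \<sigma> w c)) = fst c * dot a0 (p0 w)"
    by (simp add: p0_vscale dot_smul_right)
  have e1: "dot a0 (p1 (vscale \<sigma> w c)) + dot a1 (sv \<sigma> (p0 (vscale \<sigma> w c)))
     = \<sigma> (fst c) * (dot a0 (p1 w) + dot a1 (sv \<sigma> (p0 w))) + snd c * dot a0 (p0 w)"
    by (simp add: p0_vscale p1_vscale dot_add_right dot_smul_right sv_smul distrib_left)
  show ?thesis unfolding Ker_def using e0 e1 h0 h1 by simp
qed

lemma range_sub_Ker: "range (vscale \<sigma> w) \<subseteq> Ker a0 a1 \<longleftrightarrow> w \<in> Ker a0 a1"
proof
  assume "range (vscale \<sigma> w) \<subseteq> Ker a0 a1"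
  then have "vscale \<sigma> w (1,0) \<in> Ker a0 a1" by blast
  then show "w \<in> Ker a0 a1" by (simp add: vscale_one)
next
  assume "w \<in> Ker a0 a1" then show "range (vscale \<sigma> w) \<subseteq> Ker a0 a1" using Ker_vscale by blast
qed

definition lpar :: "'a skr \<Rightarrow> 'a skr \<Rightarrow> 'a vec3" where
  "lpar e1 e2 = ((1,0),(0,0),e1)"

lemma Ker_line3:
  assumes a3: "snd (snd a0) \<noteq> 0"
  shows "phg_line \<sigma> (Ker a0 a1)"
proof -
  define al1 where "al1 = fst a0" define al2 where "al2 = fst (snd a0)" define al3 where "al3 = snd (snd a0)"
  define be1 where "be1 = fst a1" define be2 where "be2 = fst (snd a1)" define be3 where "be3 = snd (snd a1)"
  define ia where "ia = inverse al3"
  have ia: "al3 * ia = 1" using a3 unfolding ia_def al3_def by simp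
  define e10 where "e10 = - (al1 * ia)"
  define e20 where "e20 = - (al2 * ia)"
  define e11 where "e11 = - ((be1 + be3 * \<sigma> e10) * ia)"
  define e21 where "e21 = - ((be2 + be3 * \<sigma> e20) * ia)"
  define u :: "'a vec3" where "u = ((1,0),(0,0),(e10,e11))"
  define w :: "'a vec3" where "w = ((0,0),(1,0),(e20,e21))"
  define f where "f = (\<lambda>(c, d). vadd (vscale \<sigma> u c) (vscale \<sigma> w d))"
  have f_eq: "f (c,d) = (c, d, (e10 * fst c + e20 * fst d,
      e10 * snd c + e11 * \<sigma> (fst c) + e20 * snd d + e21 * \<sigma> (fst d)))" for c d
    by (simp add: f_def u_def w_def vadd_def vscale_def skmul_def skadd_def)
  have inj: "inj f"
    unfolding inj_def by (auto simp: f_eq)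
  have sub1: "f cd \<in> Ker a0 a1" for cd
  proof -
    obtain c0 c1 d0 d1 where cd: "cd = ((c0,c1),(d0,d1))" by (metis prod.collapse)
    have 1: "al1 * c0 + al2 * d0 + al3 * (e10 * c0 + e20 * d0) = 0"
      using ia unfolding e10_def e20_def by algebra
    have s3: "\<sigma> (e10 * c0 + e20 * d0) = \<sigma> e10 * \<sigma> c0 + \<sigma> e20 * \<sigma> d0"
      by (simp add: s_add s_mult)
    have 2: "al1 * c1 + al2 * d1 + al3 * (e10 * c1 + e11 * \<sigma> c0 + e20 * d1 + e21 * \<sigma> d0)
        + (be1 * \<sigma> c0 + be2 * \<sigma> d0 + be3 * (\<sigma> e10 * \<sigma> c0 + \<sigma> e20 * \<sigma> d0)) = 0"
      using ia e10_def e20_def unfolding e11_def e21_def by algebra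
    show ?thesis using 1 2 unfolding cd f_eq Ker_def
      by (simp add: dot_def p0_def p1_def sv_def al1_def al2_def al3_def be1_def be2_def be3_def s3)
  qed
  have sub2: "v \<in> range f" if v: "v \<in> Ker a0 a1" for v
  proof -
    obtain c0 c1 d0 d1 x3 y3 where vv: "v = ((c0,c1),(d0,d1),(x3,y3))" by (metis prod.collapse)
    have k1: "al1 * c0 + al2 * d0 + al3 * x3 = 0" and
      k2: "al1 * c1 + al2 * d1 + al3 * y3 + (be1 * \<sigma> c0 + be2 * \<sigma> d0 + be3 * \<sigma> x3) = 0"
      using v unfolding Ker_def vv
      by (simp_all add: dot_def p0_def p1_def sv_def al1_def al2_def al3_def be1_def be2_def be3_def)
    have x3: "x3 = e10 * c0 + e20 * d0"
      using k1 ia unfolding e10_def e20_def by algebra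
    have s3: "\<sigma> x3 = \<sigma> e10 * \<sigma> c0 + \<sigma> e20 * \<sigma> d0"
      unfolding x3 by (simp add: s_add s_mult)
    have k2': "al1 * c1 + al2 * d1 + al3 * y3 + (be1 * \<sigma> c0 + be2 * \<sigma> d0 + be3 * (\<sigma> e10 * \<sigma> c0 + \<sigma> e20 * \<sigma> d0)) = 0"
      using k2 unfolding s3 .
    have y3: "y3 = e10 * c1 + e11 * \<sigma> c0 + e20 * d1 + e21 * \<sigma> d0"
      using k2' ia e10_def e20_def unfolding e11_def e21_def by algebra
    have "v = f ((c0,c1),(d0,d1))" using x3 y3 by (simp add: f_eq vv)
    then show ?thesis by blast
  qed
  have "Ker a0 a1 = range f" using sub1 sub2 by blast
  then show ?thesis unfolding phg_line_def using inj f_def by blast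
qed


lemma skmul_assoc: "skmul \<sigma> (skmul \<sigma> a b) c = skmul \<sigma> a (skmul \<sigma> b c)"
  by (simp add: skmul_def s_mult s_add algebra_simps)
lemma skmul_one_left: "skmul \<sigma> (1,0) d = d" by (simp add: skmul_def)

definition rot :: "'b \<times> 'b \<times> 'b \<Rightarrow> 'b \<times> 'b \<times> 'b" where
  "rot x = (fst (snd x), snd (snd x), fst x)"

lemma rot3: "rot (rot (rot x)) = x" by (simp add: rot_def)
lemma rot_inj: "inj rot" by (metis injI rot3)
lemma p0_rot: "p0 (rot w) = rot (p0 w)" by (simp add: rot_def p0_def)
lemma p1_rot: "p1 (rot w) = rot (p1 w)" by (simp add: rot_def p1_def)
lemma dot_rot: "dot (rot a) (rot x) = dot a x" by (simp add: rot_def dot_def algebra_simps)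
lemma sv_rot: "sv \<sigma> (rot x) = rot (sv \<sigma> x)" by (simp add: rot_def sv_def)
lemma rot_zero: "rot x = 0 \<longleftrightarrow> x = 0" by (auto simp: rot_def prod_eq_iff)

lemma rot_image: "rot ` S = {w. rot (rot w) \<in> S}"
proof (intro set_eqI iffI)
  fix w assume "w \<in> rot ` S" then obtain x where "x \<in> S" "w = rot x" by blast
  then show "w \<in> {w. rot (rot w) \<in> S}" by (simp add: rot3)
next
  fix w assume "w \<in> {w. rot (rot w) \<in> S}"
  then have "rot (rot (rot w)) \<in> rot ` S" by blast
  then show "w \<in> rot ` S" by (simp add: rot3)
qed

lemma Ker_rot: "Ker (rot a0) (rot a1) = rot ` Ker a0 a1"
proof -
  have "w \<in> Ker (rot a0) (rot a1) \<longleftrightarrow> rot (rot w) \<in> Ker a0 a1" for w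
  proof -
    have e: "rot (rot (rot z)) = z" for z :: "'a v3" by (rule rot3)
    have "dot (rot a0) (p0 w) = dot a0 (p0 (rot (rot w)))"
      by (metis dot_rot e p0_rot)
    moreover have "dot (rot a0) (p1 w) = dot a0 (p1 (rot (rot w)))"
      by (metis dot_rot e p1_rot)
    moreover have "dot (rot a1) (sv \<sigma> (p0 w)) = dot a1 (sv \<sigma> (p0 (rot (rot w))))"
      by (metis dot_rot e p0_rot sv_rot)
    ultimately show ?thesis unfolding Ker_def by simp
  qed
  then show ?thesis unfolding rot_image by blast
qed

lemma line_rot: assumes "phg_line \<sigma> L" shows "phg_line \<sigma> (rot ` L)"
proof -
  obtain u w where inj: "inj (\<lambda>(c, d). vadd (vscale \<sigma> u c) (vscale \<sigma> w d))"
    and L: "L = range (\<lambda>(c, d). vadd (vscale \<sigma> u c) (vscale \<sigma> w d))"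
    using assms unfolding phg_line_def by blast
  have comm: "rot (vadd (vscale \<sigma> u c) (vscale \<sigma> w d)) = vadd (vscale \<sigma> (rot u) c) (vscale \<sigma> (rot w) d)" for c d
    by (simp add: rot_def vadd_def vscale_def)
  have "rot ` L = range (\<lambda>(c, d). vadd (vscale \<sigma> (rot u) c) (vscale \<sigma> (rot w) d))"
    unfolding L image_image by (simp add: comm case_prod_beta)
  moreover have "inj (\<lambda>(c, d). vadd (vscale \<sigma> (rot u) c) (vscale \<sigma> (rot w) d))"
  proof -
    have "(\<lambda>(c, d). vadd (vscale \<sigma> (rot u) c) (vscale \<sigma> (rot w) d)) = rot \<circ> (\<lambda>(c, d). vadd (vscale \<sigma> u c) (vscale \<sigma> w d))"
      by (auto simp: comm)
    then show ?thesis using inj_compose[OF rot_inj inj] by simp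
  qed
  ultimately show ?thesis unfolding phg_line_def by blast
qed

lemma Ker_line:
  assumes "a0 \<noteq> 0" shows "phg_line \<sigma> (Ker a0 a1)"
proof -
  consider "snd (snd a0) \<noteq> 0" | "fst (snd a0) \<noteq> 0" | "fst a0 \<noteq> 0" using assms by (auto simp: prod_eq_iff)
  then show ?thesis
  proof cases
    case 1 then show ?thesis by (rule Ker_line3)
  next
    case 2
    define b0 where "b0 = rot (rot a0)" define b1 where "b1 = rot (rot a1)"
    have "snd (snd b0) \<noteq> 0" using 2 by (simp add: b0_def rot_def)
    then have "phg_line \<sigma> (rot ` Ker b0 b1)" by (intro line_rot Ker_line3)
    then show ?thesis unfolding Ker_rot[symmetric] b0_def b1_def rot3 .
  next
    case 3
    define b0 where "b0 = rot a0" define b1 where "b1 = rot a1"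
    have "snd (snd b0) \<noteq> 0" using 3 by (simp add: b0_def rot_def)
    then have "phg_line \<sigma> (rot ` rot ` Ker b0 b1)" by (intro line_rot Ker_line3)
    then show ?thesis unfolding Ker_rot[symmetric] b0_def b1_def rot3 .
  qed
qed

lemma point_free: assumes "phg_point \<sigma> P" shows "\<exists>w. p0 w \<noteq> 0 \<and> P = range (vscale \<sigma> w)"
proof -
  obtain w where inj: "inj (vscale \<sigma> w)" and P: "P = range (vscale \<sigma> w)"
    using assms unfolding phg_point_def by blast
  have "p0 w \<noteq> 0"
  proof
    assume z: "p0 w = 0"
    have "vscale \<sigma> w (0,1) = vscale \<sigma> w (0,0)"
      by (simp add: vec_eq_p p0_vscale p1_vscale z)
    then show False using inj by (metis injD prod.inject zero_neq_one)
  qed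
  then show ?thesis using P by blast
qed

lemma free_inj: assumes "p0 w \<noteq> 0" shows "inj (vscale \<sigma> w)"
proof (rule injI)
  fix c d assume e: "vscale \<sigma> w c = vscale \<sigma> w d"
  have 0: "fst c = fst d" using e assms by (metis p0_vscale smul_cancel)
  have "smul (snd c) (p0 w) = smul (snd d) (p0 w)"
    using arg_cong[OF e, of p1] 0 by (simp add: p1_vscale)
  then have "snd c = snd d" using assms smul_cancel by blast
  then show "c = d" using 0 by (simp add: prod_eq_iff)
qed

definition fib :: "'a vec3 set \<Rightarrow> 'a vec3 set" where
  "fib P = {u. p0 u \<noteq> 0 \<and> range (vscale \<sigma> u) = P}"

lemma range_vscale_unit:
  assumes "fst c \<noteq> 0" shows "range (vscale \<sigma> (vscale \<sigma> w c)) = range (vscale \<sigma> w)"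
proof
  show "range (vscale \<sigma> (vscale \<sigma> w c)) \<subseteq> range (vscale \<sigma> w)"
    by (auto simp: vscale_vscale)
  have "vscale \<sigma> w d = vscale \<sigma> (vscale \<sigma> w c) (skmul \<sigma> (cinv c) d)" for d
  proof -
    have "vscale \<sigma> (vscale \<sigma> w c) (skmul \<sigma> (cinv c) d) = vscale \<sigma> w (skmul \<sigma> c (skmul \<sigma> (cinv c) d))"
      by (simp add: vscale_vscale)
    also have "\<dots> = vscale \<sigma> w (skmul \<sigma> (skmul \<sigma> c (cinv c)) d)"
      by (simp only: skmul_assoc)
    also have "\<dots> = vscale \<sigma> w d" using assms
      by (simp add: skmul_cinv skmul_one_left)
    finally show ?thesis by simp
  qed
  then show "range (vscale \<sigma> w) \<subseteq> range (vscale \<sigma> (vscale \<sigma> w c))" by blast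
qed

lemma fib_eq: assumes "p0 w \<noteq> 0"
  shows "fib (range (vscale \<sigma> w)) = vscale \<sigma> w ` {c. fst c \<noteq> 0}"
proof
  show "vscale \<sigma> w ` {c. fst c \<noteq> 0} \<subseteq> fib (range (vscale \<sigma> w))"
  proof
    fix u assume "u \<in> vscale \<sigma> w ` {c. fst c \<noteq> 0}"
    then obtain c where c: "fst c \<noteq> 0" "u = vscale \<sigma> w c" by blast
    have "p0 u \<noteq> 0" using c assms by (simp add: p0_vscale smul_eq_0)
    moreover have "range (vscale \<sigma> u) = range (vscale \<sigma> w)" using c range_vscale_unit by simp
    ultimately show "u \<in> fib (range (vscale \<sigma> w))" unfolding fib_def by blast
  qed
  show "fib (range (vscale \<sigma> w)) \<subseteq> vscale \<sigma> w ` {c. fst c \<noteq> 0}"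
  proof
    fix u assume u: "u \<in> fib (range (vscale \<sigma> w))"
    then have "u \<in> range (vscale \<sigma> w)" unfolding fib_def by (metis (mono_tags, lifting) mem_Collect_eq rangeI vscale_one)
    then obtain c where c: "u = vscale \<sigma> w c" by blast
    have "fst c \<noteq> 0" using u c by (auto simp: fib_def p0_vscale)
    then show "u \<in> vscale \<sigma> w ` {c. fst c \<noteq> 0}" using c by blast
  qed
qed

end

locale ffaut = faut \<sigma> for \<sigma> :: "'a::{field,finite} \<Rightarrow> 'a"
begin

lemma card_units: "card {c::'a \<times> 'a. fst c \<noteq> 0} = (CARD('a) - 1) * CARD('a)"
proof -
  have "{c::'a \<times> 'a. fst c \<noteq> 0} = (UNIV - {0}) \<times> UNIV" by auto
  then show ?thesis by (simp add: card_cartesian_product card_Diff_singleton)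
qed

lemma card_fib: assumes "phg_point \<sigma> P" shows "card (fib P) = (CARD('a) - 1) * CARD('a)"
proof -
  obtain w where w: "p0 w \<noteq> 0" "P = range (vscale \<sigma> w)" using point_free[OF assms] by blast
  have "card (fib P) = card {c::'a \<times> 'a. fst c \<noteq> 0}"
    unfolding w(2) fib_eq[OF w(1)] using free_inj[OF w(1)]
    by (simp add: card_image inj_on_subset)
  then show ?thesis using card_units by simp
qed

lemma card_pts:
  assumes "\<forall>P\<in>S. phg_point \<sigma> P"
  shows "card {u. p0 u \<noteq> 0 \<and> range (vscale \<sigma> u) \<in> S} = (CARD('a) - 1) * CARD('a) * card S"
proof -
  have fin: "finite S"
  proof -
    have "S \<subseteq> range (\<lambda>w. range (vscale \<sigma> w))" using assms unfolding phg_point_def by blast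
    then show ?thesis by (rule finite_subset) simp
  qed
  have eq: "{u. p0 u \<noteq> 0 \<and> range (vscale \<sigma> u) \<in> S} = (\<Union>P\<in>S. fib P)"
    unfolding fib_def by auto
  have "card (\<Union>P\<in>S. fib P) = (\<Sum>P\<in>S. card (fib P))"
    by (rule card_UN_disjoint[OF fin]) (auto simp: fib_def)
  also have "\<dots> = (\<Sum>P\<in>S. (CARD('a) - 1) * CARD('a))" using assms card_fib by (meson sum.cong)
  also have "\<dots> = card S * ((CARD('a) - 1) * CARD('a))" by (metis sum_constant of_nat_id)
  finally have X: "card (\<Union>P\<in>S. fib P) = card S * ((CARD('a) - 1) * CARD('a))" .
  show ?thesis unfolding eq X by (rule mult.commute)
qed

end

lemma card_filter_sum: "finite A \<Longrightarrow> card {x\<in>A. P x} = (\<Sum>x\<in>A. if P x then 1 else 0)"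
  by (simp add: sum.If_cases Int_def)

lemma double_count:
  assumes "finite A" "finite B"
  shows "(\<Sum>a\<in>A. card {b\<in>B. P a b}) = (\<Sum>b\<in>B. card {a\<in>A. P a b})"
proof -
  have "(\<Sum>a\<in>A. card {b\<in>B. P a b}) = (\<Sum>a\<in>A. \<Sum>b\<in>B. if P a b then 1 else 0)"
    using assms by (simp add: card_filter_sum)
  also have "\<dots> = (\<Sum>b\<in>B. \<Sum>a\<in>A. if P a b then 1 else 0)" by (rule sum.swap)
  also have "\<dots> = (\<Sum>b\<in>B. card {a\<in>A. P a b})"
    using assms by (simp add: card_filter_sum)
  finally show ?thesis .
qed

lemma card_fibers:
  fixes f :: "'b \<Rightarrow> 'c::finite"
  assumes "finite A"
  shows "card A = (\<Sum>y\<in>UNIV. card {x\<in>A. f x = y})"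
proof -
  have "(\<Sum>y\<in>UNIV. card {x\<in>A. f x = y}) = (\<Sum>x\<in>A. card {y\<in>UNIV. f x = y})"
    using double_count[of UNIV A "\<lambda>y x. f x = y"] assms by simp
  also have "\<dots> = (\<Sum>x\<in>A. 1)" by simp
  finally show ?thesis by simp
qed

lemma card_fibers_const:
  fixes f :: "'b \<Rightarrow> 'c::finite"
  assumes "finite A" and eq: "\<And>y y'. card {x\<in>A. f x = y} = card {x\<in>A. f x = y'}"
  shows "card A = CARD('c) * card {x\<in>A. f x = y}"
proof -
  have "card A = (\<Sum>y'\<in>UNIV. card {x\<in>A. f x = y'})" using card_fibers[OF assms(1), of f] by simp
  also have "\<dots> = (\<Sum>y'\<in>(UNIV::'c set). card {x\<in>A. f x = y})" using eq by (meson sum.cong)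
  also have "\<dots> = CARD('c) * card {x\<in>A. f x = y}" by (metis sum_constant of_nat_id)
  finally show ?thesis .
qed

lemma card_v3: "CARD('a::finite v3) = CARD('a) ^ 3"
  by (simp add: power3_eq_cube)

lemma exists_dot1:
  fixes s :: "'a::field v3"
  assumes "s \<noteq> 0" shows "\<exists>d. dot d s = 1"
proof -
  obtain s1 s2 s3 where s: "s = (s1,s2,s3)" by (metis prod.collapse)
  consider "s1 \<noteq> 0" | "s2 \<noteq> 0" | "s3 \<noteq> 0" using assms unfolding s by (auto simp: v3_zero)
  then show ?thesis
  proof cases
    case 1 then show ?thesis by (intro exI[of _ "(inverse s1,0,0)"]) (simp add: s dot_def)
  next
    case 2 then show ?thesis by (intro exI[of _ "(0,inverse s2,0)"]) (simp add: s dot_def)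
  next
    case 3 then show ?thesis by (intro exI[of _ "(0,0,inverse s3)"]) (simp add: s dot_def)
  qed
qed

lemma exists_dot01:
  fixes s t :: "'a::field v3"
  assumes "s \<noteq> 0" "\<not> par t s" shows "\<exists>d. dot d s = 0 \<and> dot d t = 1"
proof -
  have "\<exists>a. dot a s = 0 \<and> dot a t \<noteq> 0"
  proof (rule ccontr)
    assume H: "\<not> ?thesis"
    then have H': "\<And>a. dot a s = 0 \<Longrightarrow> dot a t = 0" by blast
    obtain s1 s2 s3 where s: "s = (s1,s2,s3)" by (metis prod.collapse)
    obtain t1 t2 t3 where t: "t = (t1,t2,t3)" by (metis prod.collapse)
    consider "s1 \<noteq> 0" | "s2 \<noteq> 0" | "s3 \<noteq> 0" using assms unfolding s by (auto simp: v3_zero)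
    then show False
    proof cases
      case 1
      have a: "s1 * t2 = s2 * t1" using H'[of "(-s2,s1,0)"] by (simp add: s t dot_def algebra_simps)
      have b: "s1 * t3 = s3 * t1" using H'[of "(-s3,0,s1)"] by (simp add: s t dot_def algebra_simps)
      have "t = smul (t1/s1) s" using 1 a b by (simp add: s t smul_def field_simps)
      then show False using assms(2) unfolding par_def by blast
    next
      case 2
      have a: "s2 * t1 = s1 * t2" using H'[of "(s2,-s1,0)"] by (simp add: s t dot_def algebra_simps)
      have b: "s2 * t3 = s3 * t2" using H'[of "(0,-s3,s2)"] by (simp add: s t dot_def algebra_simps)
      have "t = smul (t2/s2) s" using 2 a b by (simp add: s t smul_def field_simps)
      then show False using assms(2) unfolding par_def by blast
    next
      case 3
      have a: "s3 * t1 = s1 * t3" using H'[of "(s3,0,-s1)"] by (simp add: s t dot_def algebra_simps)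
      have b: "s3 * t2 = s2 * t3" using H'[of "(0,s3,-s2)"] by (simp add: s t dot_def algebra_simps)
      have "t = smul (t3/s3) s" using 3 a b by (simp add: s t smul_def field_simps)
      then show False using assms(2) unfolding par_def by blast
    qed
  qed
  then obtain a where a: "dot a s = 0" "dot a t \<noteq> 0" by blast
  show ?thesis
    by (intro exI[of _ "smul (inverse (dot a t)) a"]) (simp add: dot_smul_left a)
qed

lemma shift_card:
  fixes s :: "'a::{field,finite} v3"
  assumes d: "dot d s = 0" "dot d t = 1"
  shows "card {a. dot a s = b \<and> dot a t = g} = card {a. dot a s = b \<and> dot a t = g'}"
proof -
  have "bij_betw (\<lambda>a. a + smul (g' - g) d) {a. dot a s = b \<and> dot a t = g} {a. dot a s = b \<and> dot a t = g'}"
  proof (rule bij_betw_byWitness[where f'="\<lambda>a. a - smul (g' - g) d"])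
    show "(\<lambda>a. a + smul (g' - g) d) ` {a. dot a s = b \<and> dot a t = g} \<subseteq> {a. dot a s = b \<and> dot a t = g'}"
      using d by (auto simp: dot_add_left dot_smul_left)
    have lem: "dot (a - smul (g' - g) d) x = dot a x - (g' - g) * dot d x" for a x
      by (simp add: dot_def smul_def algebra_simps)
    show "(\<lambda>a. a - smul (g' - g) d) ` {a. dot a s = b \<and> dot a t = g'} \<subseteq> {a. dot a s = b \<and> dot a t = g}"
    proof
      fix x assume "x \<in> (\<lambda>a. a - smul (g' - g) d) ` {a. dot a s = b \<and> dot a t = g'}"
      then obtain a where a: "dot a s = b" "dot a t = g'" "x = a - smul (g' - g) d" by blast
      show "x \<in> {a. dot a s = b \<and> dot a t = g}" using d a lem[of a s] lem[of a t] by simp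
    qed
  qed auto
  then show ?thesis by (rule bij_betw_same_card)
qed

lemma card_dot1:
  fixes s :: "'a::{field,finite} v3"
  assumes "s \<noteq> 0" shows "card {a. dot a s = b} = CARD('a) ^ 2"
proof -
  obtain d where d: "dot d s = 1" using exists_dot1[OF assms] by blast
  have d0: "dot d 0 = 0" by simp
  have eq: "card {a\<in>UNIV. dot a 0 = 0 \<and> dot a s = y} = card {a\<in>UNIV. dot a 0 = 0 \<and> dot a s = y'}" for y y'
    using shift_card[of d 0 s 0 y y'] d by simp
  have "card (UNIV :: 'a v3 set) = CARD('a) * card {a\<in>UNIV. dot a s = b}"
    using card_fibers_const[of UNIV "\<lambda>a. dot a s" b] eq by simp
  then have "CARD('a) * (CARD('a) * CARD('a)) = CARD('a) * card {a. dot a s = b}" by simp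
  moreover have "CARD('a) > 0" by simp
  ultimately show ?thesis by (simp add: power2_eq_square)
qed

lemma card_dot2:
  fixes s :: "'a::{field,finite} v3"
  assumes "s \<noteq> 0" "\<not> par t s" shows "card {a. dot a s = b \<and> dot a t = g} = CARD('a)"
proof -
  obtain d where d: "dot d s = 0" "dot d t = 1" using exists_dot01[OF assms] by blast
  have eq: "card {a\<in>{a. dot a s = b}. dot a t = y} = card {a\<in>{a. dot a s = b}. dot a t = y'}" for y y'
    using shift_card[OF d, of b y y'] by simp
  have "card {a. dot a s = b} = CARD('a) * card {a\<in>{a. dot a s = b}. dot a t = g}"
    using card_fibers_const[of "{a. dot a s = b}" "\<lambda>a. dot a t" g] eq by simp
  then have "CARD('a) * CARD('a) = CARD('a) * card {a. dot a s = b \<and> dot a t = g}"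
    using card_dot1[OF assms(1)] by (simp add: power2_eq_square)
  moreover have "CARD('a) > 0" by simp
  ultimately show ?thesis by simp
qed

lemma card_nz_dot1:
  fixes x :: "'a::{field,finite} v3"
  assumes "x \<noteq> 0" shows "card {a. a \<noteq> 0 \<and> dot a x = 0} = CARD('a) ^ 2 - 1"
proof -
  have "{a. a \<noteq> 0 \<and> dot a x = 0} = {a. dot a x = 0} - {0}" by auto
  then show ?thesis using card_dot1[OF assms, of 0] by simp
qed

lemma card_nz_dot2:
  fixes x :: "'a::{field,finite} v3"
  assumes "x \<noteq> 0" "\<not> par y x" shows "card {a. a \<noteq> 0 \<and> dot a x = 0 \<and> dot a y = 0} = CARD('a) - 1"
proof -
  have "{a. a \<noteq> 0 \<and> dot a x = 0 \<and> dot a y = 0} = {a. dot a x = 0 \<and> dot a y = 0} - {0}" by auto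
  then show ?thesis using card_dot2[OF assms, of 0 0] by simp
qed

lemma card_nz: "card {x::'a::{field,finite} v3. x \<noteq> 0} = CARD('a) ^ 3 - 1"
proof -
  have "{x::'a v3. x \<noteq> 0} = UNIV - {0}" by auto
  then show ?thesis using card_v3[where 'a='a] by (simp add: card_Diff_singleton)
qed

lemma card_par:
  fixes x :: "'a::{field,finite} v3"
  assumes "x \<noteq> 0" shows "card {y. y \<noteq> 0 \<and> par y x} = CARD('a) - 1"
proof -
  have "{y. y \<noteq> 0 \<and> par y x} = (\<lambda>c. smul c x) ` (UNIV - {0})"
    using assms by (auto simp: par_def smul_eq_0)
  moreover have "inj_on (\<lambda>c. smul c x) (UNIV - {0})"
    using assms by (auto simp: inj_on_def smul_cancel)
  ultimately show ?thesis by (simp add: card_image card_Diff_singleton)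
qed

lemma card_par': 
  fixes x :: "'a::{field,finite} v3"
  assumes "x \<noteq> 0" shows "card {y. y \<noteq> 0 \<and> par x y} = CARD('a) - 1"
proof -
  have "{y. y \<noteq> 0 \<and> par x y} = {y. y \<noteq> 0 \<and> par y x}"
    using assms par_sym by blast
  then show ?thesis using card_par[OF assms] by simp
qed

lemma sum_indicator:
  assumes "finite A" "B \<subseteq> A" shows "(\<Sum>x\<in>A. if x \<in> B then c else 0) = c * (card B :: nat)"
proof -
  have "(\<Sum>x\<in>A. if x \<in> B then c else 0) = sum (\<lambda>x. c) (A \<inter> B)"
    using sum.inter_restrict[OF assms(1), of "\<lambda>x. c" B] by simp
  also have "A \<inter> B = B" using assms(2) by blast
  finally show ?thesis by (simp add: mult.commute)
qed

locale arcctx = ffaut \<sigma> for \<sigma> :: "'a::{field,finite} \<Rightarrow> 'a" +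
  fixes K :: "'a vec3 set set" and h :: nat
  assumes qh: "CARD('a) = 2 * h"
    and arc: "proj_arc \<sigma> K ((CARD('a)^4 - CARD('a)) div 2) (CARD('a)^2 div 2)"
begin


definition Vk where "Vk = {u. p0 u \<noteq> 0 \<and> range (vscale \<sigma> u) \<in> K}"
definition QQ where "QQ = (CARD('a) - 1) * CARD('a)"
definition kk where "kk = (CARD('a)^4 - CARD('a)) div 2"
definition nn where "nn = CARD('a)^2 div 2"
definition cL where "cL a0 a1 = card (Vk \<inter> Ker a0 a1)"

lemma K_points: "\<forall>P\<in>K. phg_point \<sigma> P" using arc unfolding proj_arc_def by blast
lemma card_K: "card K = kk" using arc unfolding proj_arc_def kk_def by blast
lemma card_Vk: "card Vk = QQ * kk" using card_pts[OF K_points] card_K unfolding Vk_def QQ_def by simp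
lemma Vk_free: "u \<in> Vk \<Longrightarrow> p0 u \<noteq> 0" unfolding Vk_def by blast
lemma fib_Vk: "v \<in> Vk \<Longrightarrow> fib (range (vscale \<sigma> v)) \<subseteq> Vk" unfolding fib_def Vk_def by auto

lemma cL_le: assumes "a0 \<noteq> 0" shows "cL a0 a1 \<le> QQ * nn"
proof -
  have e: "Vk \<inter> Ker a0 a1 = {u. p0 u \<noteq> 0 \<and> range (vscale \<sigma> u) \<in> {P\<in>K. P \<subseteq> Ker a0 a1}}"
    unfolding Vk_def using range_sub_Ker by blast
  have "card {P\<in>K. P \<subseteq> Ker a0 a1} \<le> nn" using arc Ker_line[OF assms] unfolding proj_arc_def nn_def by blast
  moreover have "cL a0 a1 = QQ * card {P\<in>K. P \<subseteq> Ker a0 a1}"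
    unfolding cL_def e QQ_def by (rule card_pts) (use K_points in blast)
  ultimately show ?thesis by simp
qed

lemma sum_lines:
  assumes v: "v \<in> Vk" and a0: "a0 \<noteq> 0" "dot a0 (p0 v) = 0"
  shows "(\<Sum>a1\<in>{a1. dot a1 (sv \<sigma> (p0 v)) = - dot a0 (p1 v)}. cL a0 a1)
       = CARD('a) * card {u\<in>Vk. dot a0 (p0 u) = 0 \<and> \<not> par (p0 u) (p0 v)}
       + CARD('a)^2 * card {u\<in>Vk. \<exists>c. p0 u = smul c (p0 v) \<and> dot a0 (p1 u) = \<sigma> c * dot a0 (p1 v)}"
proof -
  let ?S = "{a1. dot a1 (sv \<sigma> (p0 v)) = - dot a0 (p1 v)}"
  let ?X = "{u\<in>Vk. dot a0 (p0 u) = 0 \<and> \<not> par (p0 u) (p0 v)}"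
  let ?Y = "{u\<in>Vk. \<exists>c. p0 u = smul c (p0 v) \<and> dot a0 (p1 u) = \<sigma> c * dot a0 (p1 v)}"
  have v0: "p0 v \<noteq> 0" using v Vk_free by blast
  have sv0: "sv \<sigma> (p0 v) \<noteq> 0" using v0 by simp
  have e1: "Vk \<inter> Ker a0 a1 = {u\<in>Vk. u \<in> Ker a0 a1}" for a1 by blast
  have "(\<Sum>a1\<in>?S. cL a0 a1) = (\<Sum>a1\<in>?S. card {u\<in>Vk. u \<in> Ker a0 a1})" unfolding cL_def e1 ..
  also have "\<dots> = (\<Sum>u\<in>Vk. card {a1\<in>?S. u \<in> Ker a0 a1})" by (rule double_count) simp_all
  also have "\<dots> = (\<Sum>u\<in>Vk. (if u \<in> ?X then CARD('a) else 0) + (if u \<in> ?Y then CARD('a)^2 else 0))"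
  proof (rule sum.cong[OF refl])
    fix u assume u: "u \<in> Vk"
    show "card {a1\<in>?S. u \<in> Ker a0 a1} = (if u \<in> ?X then CARD('a) else 0) + (if u \<in> ?Y then CARD('a)^2 else 0)"
    proof (cases "dot a0 (p0 u) = 0")
      case False
      then have 1: "{a1\<in>?S. u \<in> Ker a0 a1} = {}" unfolding Ker_def by auto
      have nX: "u \<notin> ?X" using False by auto
      have nY: "u \<notin> ?Y" using False a0 by (auto simp: dot_smul_right)
      show ?thesis by (simp only: 1 nX nY if_False card.empty add_0)
    next
      case True
      show ?thesis
      proof (cases "par (p0 u) (p0 v)")
        case False
        have "{a1\<in>?S. u \<in> Ker a0 a1} = {a1. dot a1 (sv \<sigma> (p0 v)) = - dot a0 (p1 v) \<and> dot a1 (sv \<sigma> (p0 u)) = - dot a0 (p1 u)}"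
          using True unfolding Ker_def by (auto simp: eq_neg_iff_add_eq_0 add.commute)
        also have "card \<dots> = CARD('a)" by (rule card_dot2) (use sv0 sv_par False in auto)
        finally have 1: "card {a1\<in>?S. u \<in> Ker a0 a1} = CARD('a)" .
        have "u \<in> ?X" using u True False by auto
        moreover have "u \<notin> ?Y" using False unfolding par_def by auto
        ultimately show ?thesis using 1 by simp
      next
        case True2: True
        then obtain c where c: "p0 u = smul c (p0 v)" unfolding par_def by blast
        have cu: "c' = c" if "p0 u = smul c' (p0 v)" for c'
          using that c v0 smul_cancel by metis
        have key: "u \<in> Ker a0 a1 \<longleftrightarrow> dot a0 (p1 u) = \<sigma> c * dot a0 (p1 v)" if "a1 \<in> ?S" for a1
        proof -
          have "dot a1 (sv \<sigma> (p0 u)) = \<sigma> c * (- dot a0 (p1 v))"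
            using that by (simp add: c sv_smul dot_smul_right)
          then show ?thesis using True unfolding Ker_def
            by (auto simp: eq_neg_iff_add_eq_0[symmetric])
        qed
        have "u \<notin> ?X" using True2 by auto
        show ?thesis
        proof (cases "dot a0 (p1 u) = \<sigma> c * dot a0 (p1 v)")
          case T3: True
          then have "{a1\<in>?S. u \<in> Ker a0 a1} = ?S" using key by blast
          then have "card {a1\<in>?S. u \<in> Ker a0 a1} = CARD('a)^2" using card_dot1[OF sv0] by simp
          moreover have "u \<in> ?Y" using u c T3 by blast
          ultimately show ?thesis using \<open>u \<notin> ?X\<close> by simp
        next
          case F3: False
          then have 1: "{a1\<in>?S. u \<in> Ker a0 a1} = {}" using key by blast
          have nY: "u \<notin> ?Y" using F3 cu by blast
          show ?thesis using \<open>u \<notin> ?X\<close> by (simp only: 1 nY if_False card.empty add_0)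
        qed
      qed
    qed
  qed
  also have "\<dots> = (\<Sum>u\<in>Vk. if u \<in> ?X then CARD('a) else 0) + (\<Sum>u\<in>Vk. if u \<in> ?Y then CARD('a)^2 else 0)"
    by (rule sum.distrib)
  also have "\<dots> = CARD('a) * card ?X + CARD('a)^2 * card ?Y"
  proof -
    have fin: "finite Vk" by simp
    have subX: "?X \<subseteq> Vk" by blast
    have subY: "?Y \<subseteq> Vk" by blast
    show ?thesis by (simp only: sum_indicator[OF fin subX] sum_indicator[OF fin subY])
  qed
  finally show ?thesis .
qed

end

lemma card_split: "finite A \<Longrightarrow> card {x\<in>A. P x} + card {x\<in>A. \<not> P x} = card A"
proof -
  assume f: "finite A"
  have "A = {x\<in>A. P x} \<union> {x\<in>A. \<not> P x}" by blast
  then have "card A = card ({x\<in>A. P x} \<union> {x\<in>A. \<not> P x})" by simp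
  also have "\<dots> = card {x\<in>A. P x} + card {x\<in>A. \<not> P x}"
    by (rule card_Un_disjoint) (use f in auto)
  finally show ?thesis by simp
qed

context arcctx begin

definition m where "m = h - 1"

lemma card_ge2: "CARD('a) \<ge> 2"
proof -
  have "card {0::'a, 1} \<le> CARD('a)" by (intro card_mono) auto
  then show ?thesis by simp
qed

lemma hm: "h = m + 1" using card_ge2 qh unfolding m_def by simp
lemma qm: "CARD('a) = 2*m+2" using qh hm by simp
lemma q1: "CARD('a) - 1 = 2*m+1" using qm by simp
lemma q2: "CARD('a)^2 - 1 = (2*m+1)*(2*m+3)" using qm by (simp add: power2_eq_square algebra_simps)
lemma q2': "CARD('a)^2 - CARD('a) = (2*m+2)*(2*m+1)" using qm by (simp add: power2_eq_square algebra_simps)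
lemma q3: "CARD('a)^3 - 1 = (2*m+1)*(4*m*m+10*m+7)" using qm by (simp add: power3_eq_cube algebra_simps)
lemma QQm: "QQ = (2*m+1)*(2*m+2)" unfolding QQ_def using qm q1 by simp
lemma kkm: "kk = (m+1)*(2*m+1)*(4*m*m+10*m+7)"
proof -
  have "CARD('a)^4 - CARD('a) = 2 * ((m+1)*(2*m+1)*(4*m*m+10*m+7))"
    unfolding qm by (simp add: power4_eq_xxxx algebra_simps)
  then have "kk = (2 * ((m+1)*(2*m+1)*(4*m*m+10*m+7))) div 2" unfolding kk_def by (simp only:)
  also have "\<dots> = (m+1)*(2*m+1)*(4*m*m+10*m+7)" by (rule nonzero_mult_div_cancel_left) simp
  finally show ?thesis .
qed
lemma nnm: "nn = 2*(m+1)*(m+1)"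
proof -
  have "CARD('a)^2 = 2 * (2*(m+1)*(m+1))" unfolding qm by (simp add: power2_eq_square algebra_simps)
  then have "nn = (2 * (2*(m+1)*(m+1))) div 2" unfolding nn_def by (simp only:)
  also have "\<dots> = 2*(m+1)*(m+1)" by (rule nonzero_mult_div_cancel_left) simp
  finally show ?thesis .
qed

definition Bc where "Bc x = card {u\<in>Vk. par (p0 u) x}"
definition MM where "MM = QQ * (m+1) * (2*m+1)"

lemma sumX:
  assumes v: "v \<in> Vk"
  shows "(\<Sum>a0\<in>{a0. a0 \<noteq> 0 \<and> dot a0 (p0 v) = 0}. card {u\<in>Vk. dot a0 (p0 u) = 0 \<and> \<not> par (p0 u) (p0 v)})
         + (2*m+1) * Bc (p0 v) = (2*m+1) * card Vk"
proof -
  let ?W = "{a0. a0 \<noteq> 0 \<and> dot a0 (p0 v) = 0}"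
  have v0: "p0 v \<noteq> 0" using v Vk_free by blast
  have fin: "finite Vk" by simp
  have "(\<Sum>a0\<in>?W. card {u\<in>Vk. dot a0 (p0 u) = 0 \<and> \<not> par (p0 u) (p0 v)})
      = (\<Sum>u\<in>Vk. card {a0\<in>?W. dot a0 (p0 u) = 0 \<and> \<not> par (p0 u) (p0 v)})"
    by (rule double_count) simp_all
  also have "\<dots> = (\<Sum>u\<in>Vk. if u \<in> {u\<in>Vk. \<not> par (p0 u) (p0 v)} then 2*m+1 else 0)"
  proof (rule sum.cong[OF refl])
    fix u assume u: "u \<in> Vk"
    show "card {a0\<in>?W. dot a0 (p0 u) = 0 \<and> \<not> par (p0 u) (p0 v)} = (if u \<in> {u\<in>Vk. \<not> par (p0 u) (p0 v)} then 2*m+1 else 0)"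
    proof (cases "par (p0 u) (p0 v)")
      case True
      then have "{a0\<in>?W. dot a0 (p0 u) = 0 \<and> \<not> par (p0 u) (p0 v)} = {}" by blast
      moreover have "u \<notin> {u\<in>Vk. \<not> par (p0 u) (p0 v)}" using True by blast
      ultimately show ?thesis by (simp only: if_False card.empty)
    next
      case False
      have "{a0\<in>?W. dot a0 (p0 u) = 0 \<and> \<not> par (p0 u) (p0 v)} = {a0. a0 \<noteq> 0 \<and> dot a0 (p0 v) = 0 \<and> dot a0 (p0 u) = 0}"
        using False by blast
      then have "card {a0\<in>?W. dot a0 (p0 u) = 0 \<and> \<not> par (p0 u) (p0 v)} = 2*m+1"
        using card_nz_dot2[OF v0 False] q1 by simp
      moreover have "u \<in> {u\<in>Vk. \<not> par (p0 u) (p0 v)}" using False u by blast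
      ultimately show ?thesis by (simp only: if_True)
    qed
  qed
  also have "\<dots> = (2*m+1) * card {u\<in>Vk. \<not> par (p0 u) (p0 v)}"
    by (rule sum_indicator[OF fin]) blast
  finally have 1: "(\<Sum>a0\<in>?W. card {u\<in>Vk. dot a0 (p0 u) = 0 \<and> \<not> par (p0 u) (p0 v)}) = (2*m+1) * card {u\<in>Vk. \<not> par (p0 u) (p0 v)}" .
  have 2: "Bc (p0 v) + card {u\<in>Vk. \<not> par (p0 u) (p0 v)} = card Vk"
    unfolding Bc_def by (rule card_split[OF fin])
  have 3: "(2*m+1) * card Vk = (2*m+1) * (Bc (p0 v) + card {u\<in>Vk. \<not> par (p0 u) (p0 v)})" using 2 by simp
  show ?thesis unfolding 1 3 by (simp add: algebra_simps)
qed

lemma fib_v: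
  assumes v0: "p0 v \<noteq> 0"
  shows "fib (range (vscale \<sigma> v)) = {u. \<exists>c. c \<noteq> 0 \<and> p0 u = smul c (p0 v) \<and> par (p1 u - smul (\<sigma> c) (p1 v)) (p0 v)}"
proof -
  have "vscale \<sigma> v ` {c. fst c \<noteq> 0} = {u. \<exists>c. c \<noteq> 0 \<and> p0 u = smul c (p0 v) \<and> par (p1 u - smul (\<sigma> c) (p1 v)) (p0 v)}"
  proof (intro set_eqI iffI)
    fix u assume "u \<in> vscale \<sigma> v ` {c. fst c \<noteq> 0}"
    then obtain c d where cd: "c \<noteq> 0" "u = vscale \<sigma> v (c,d)" by auto
    have "p1 u - smul (\<sigma> c) (p1 v) = smul d (p0 v)" using cd by (simp add: p1_vscale)
    then show "u \<in> {u. \<exists>c. c \<noteq> 0 \<and> p0 u = smul c (p0 v) \<and> par (p1 u - smul (\<sigma> c) (p1 v)) (p0 v)}"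
      using cd unfolding par_def by (auto simp: p0_vscale)
  next
    fix u assume "u \<in> {u. \<exists>c. c \<noteq> 0 \<and> p0 u = smul c (p0 v) \<and> par (p1 u - smul (\<sigma> c) (p1 v)) (p0 v)}"
    then obtain c d where cd: "c \<noteq> 0" "p0 u = smul c (p0 v)" "p1 u - smul (\<sigma> c) (p1 v) = smul d (p0 v)"
      unfolding par_def by blast
    have "p1 u = smul d (p0 v) + smul (\<sigma> c) (p1 v)" using cd(3) by (metis diff_add_cancel)
    then have "u = vscale \<sigma> v (c,d)" using cd(2) by (simp add: vec_eq_p p0_vscale p1_vscale)
    then show "u \<in> vscale \<sigma> v ` {c. fst c \<noteq> 0}" using cd(1) by force
  qed
  then show ?thesis using fib_eq[OF v0] by simp
qed

lemma card_fib_v: assumes v0: "p0 v \<noteq> 0" shows "card (fib (range (vscale \<sigma> v))) = QQ"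
proof -
  have "phg_point \<sigma> (range (vscale \<sigma> v))" unfolding phg_point_def using free_inj[OF v0] by blast
  then show ?thesis using card_fib QQ_def by simp
qed


lemma sumY:
  assumes v: "v \<in> Vk"
  shows "(\<Sum>a0\<in>{a0. a0 \<noteq> 0 \<and> dot a0 (p0 v) = 0}. card {u\<in>Vk. \<exists>c. p0 u = smul c (p0 v) \<and> dot a0 (p1 u) = \<sigma> c * dot a0 (p1 v)})
         = (2*m+1) * Bc (p0 v) + (2*m+2)*(2*m+1) * QQ"
proof -
  let ?W = "{a0. a0 \<noteq> 0 \<and> dot a0 (p0 v) = 0}"
  let ?E = "{u\<in>Vk. \<exists>c. p0 u = smul c (p0 v) \<and> par (p1 u - smul (\<sigma> c) (p1 v)) (p0 v)}"
  let ?P = "{u\<in>Vk. par (p0 u) (p0 v)}"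
  have v0: "p0 v \<noteq> 0" using v Vk_free by blast
  have fin: "finite Vk" by simp
  have EP: "?E \<subseteq> ?P" unfolding par_def by blast
  have "(\<Sum>a0\<in>?W. card {u\<in>Vk. \<exists>c. p0 u = smul c (p0 v) \<and> dot a0 (p1 u) = \<sigma> c * dot a0 (p1 v)})
      = (\<Sum>u\<in>Vk. card {a0\<in>?W. \<exists>c. p0 u = smul c (p0 v) \<and> dot a0 (p1 u) = \<sigma> c * dot a0 (p1 v)})"
    by (rule double_count) simp_all
  also have "\<dots> = (\<Sum>u\<in>Vk. (if u \<in> ?P - ?E then 2*m+1 else 0) + (if u \<in> ?E then (2*m+1)*(2*m+3) else 0))"
  proof (rule sum.cong[OF refl])
    fix u assume u: "u \<in> Vk"
    show "card {a0\<in>?W. \<exists>c. p0 u = smul c (p0 v) \<and> dot a0 (p1 u) = \<sigma> c * dot a0 (p1 v)}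
        = (if u \<in> ?P - ?E then 2*m+1 else 0) + (if u \<in> ?E then (2*m+1)*(2*m+3) else 0)"
    proof (cases "par (p0 u) (p0 v)")
      case False
      then have 1: "{a0\<in>?W. \<exists>c. p0 u = smul c (p0 v) \<and> dot a0 (p1 u) = \<sigma> c * dot a0 (p1 v)} = {}"
        unfolding par_def by blast
      have nP: "u \<notin> ?P - ?E" using False by blast
      have nE: "u \<notin> ?E" using False EP by blast
      show ?thesis by (simp only: 1 nP nE if_False card.empty add_0)
    next
      case True
      then obtain c where c: "p0 u = smul c (p0 v)" unfolding par_def by blast
      have cu: "c' = c" if "p0 u = smul c' (p0 v)" for c'
        using that c v0 smul_cancel by metis
      define z where "z = p1 u - smul (\<sigma> c) (p1 v)"
      have eqs: "{a0\<in>?W. \<exists>c. p0 u = smul c (p0 v) \<and> dot a0 (p1 u) = \<sigma> c * dot a0 (p1 v)}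
          = {a0. a0 \<noteq> 0 \<and> dot a0 (p0 v) = 0 \<and> dot a0 z = 0}"
      proof -
        have "(\<exists>c. p0 u = smul c (p0 v) \<and> dot a0 (p1 u) = \<sigma> c * dot a0 (p1 v)) \<longleftrightarrow> dot a0 z = 0" for a0
          using c cu unfolding z_def by (auto simp: dot_diff_right dot_smul_right)
        then show ?thesis by blast
      qed
      show ?thesis
      proof (cases "par z (p0 v)")
        case True
        then obtain d where d: "z = smul d (p0 v)" unfolding par_def by blast
        have "{a0. a0 \<noteq> 0 \<and> dot a0 (p0 v) = 0 \<and> dot a0 z = 0} = {a0. a0 \<noteq> 0 \<and> dot a0 (p0 v) = 0}"
          using d by (auto simp: dot_smul_right)
        then have 1: "card {a0\<in>?W. \<exists>c. p0 u = smul c (p0 v) \<and> dot a0 (p1 u) = \<sigma> c * dot a0 (p1 v)} = (2*m+1)*(2*m+3)"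
          unfolding eqs using card_nz_dot1[OF v0] q2 by simp
        have iE: "u \<in> ?E" using u c True unfolding z_def by blast
        then have nP: "u \<notin> ?P - ?E" by blast
        show ?thesis by (simp only: 1 nP iE if_False if_True add_0)
      next
        case False
        have 1: "card {a0\<in>?W. \<exists>c. p0 u = smul c (p0 v) \<and> dot a0 (p1 u) = \<sigma> c * dot a0 (p1 v)} = 2*m+1"
          unfolding eqs using card_nz_dot2[OF v0 False] q1 by simp
        have nE: "u \<notin> ?E" using False cu unfolding z_def by blast
        have iP: "u \<in> ?P - ?E" using nE u True by blast
        show ?thesis by (simp only: 1 nE iP if_False if_True add_0)
      qed
    qed
  qed
  also have "\<dots> = (\<Sum>u\<in>Vk. if u \<in> ?P - ?E then 2*m+1 else 0) + (\<Sum>u\<in>Vk. if u \<in> ?E then (2*m+1)*(2*m+3) else 0)"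
    by (rule sum.distrib)
  also have "\<dots> = (2*m+1) * card (?P - ?E) + (2*m+1)*(2*m+3) * card ?E"
  proof -
    have s1: "?P - ?E \<subseteq> Vk" by blast
    have s2: "?E \<subseteq> Vk" by blast
    show ?thesis by (simp only: sum_indicator[OF fin s1] sum_indicator[OF fin s2])
  qed
  finally have S: "(\<Sum>a0\<in>?W. card {u\<in>Vk. \<exists>c. p0 u = smul c (p0 v) \<and> dot a0 (p1 u) = \<sigma> c * dot a0 (p1 v)})
      = (2*m+1) * card (?P - ?E) + (2*m+1)*(2*m+3) * card ?E" .
  have Efib: "?E = fib (range (vscale \<sigma> v))"
  proof
    show "?E \<subseteq> fib (range (vscale \<sigma> v))"
    proof
      fix u assume u: "u \<in> ?E"
      then obtain c where c: "p0 u = smul c (p0 v)" "par (p1 u - smul (\<sigma> c) (p1 v)) (p0 v)" by blast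
      have "p0 u \<noteq> 0" using u Vk_free by blast
      then have "c \<noteq> 0" using c(1) by auto
      then show "u \<in> fib (range (vscale \<sigma> v))" unfolding fib_v[OF v0] using c by blast
    qed
    show "fib (range (vscale \<sigma> v)) \<subseteq> ?E"
      using fib_Vk[OF v] unfolding fib_v[OF v0] by blast
  qed
  have cE: "card ?E = QQ" unfolding Efib by (rule card_fib_v[OF v0])
  have cP: "card ?P = card (?P - ?E) + card ?E"
    using card_Diff_subset[of ?E ?P] EP card_mono[of ?P ?E] by simp
  show ?thesis unfolding S Bc_def cP cE by (simp add: algebra_simps)
qed

end

lemma arith1:
  fixes m B SX SY K Q N :: nat
  assumes 1: "SX + (2*m+1) * B = (2*m+1) * (Q * K)"
    and 2: "SY = (2*m+1) * B + (2*m+2)*(2*m+1) * Q"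
    and 3: "(2*m+2) * SX + (2*m+2)*(2*m+2) * SY \<le> (2*m+1)*(2*m+3) * ((2*m+2)*(2*m+2) * (Q * N))"
    and K: "K = (m+1)*(2*m+1)*(4*m*m+10*m+7)" and N: "N = 2*(m+1)*(m+1)"
  shows "B \<le> Q * (m+1) * (2*m+1)"
proof -
  define A where "A = (2*m+2)*(2*m+1)"
  have A0: "A > 0" unfolding A_def by simp
  have e1: "(2*m+2) * SX + (2*m+2)*(2*m+2) * SY + A * B = A * (Q*K + (2*m+2)*B + (2*m+2)*(2*m+2)*Q)"
  proof -
    have "(2*m+2) * SX + (2*m+2)*(2*m+2) * SY + A * B = (2*m+2) * (SX + (2*m+1) * B) + (2*m+2)*(2*m+2) * SY"
      unfolding A_def by (simp add: algebra_simps)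
    also have "\<dots> = A * (Q*K + (2*m+2)*B + (2*m+2)*(2*m+2)*Q)"
      unfolding 1 2 A_def by (simp add: algebra_simps)
    finally show ?thesis .
  qed
  have e2: "(2*m+1)*(2*m+3) * ((2*m+2)*(2*m+2) * (Q * N)) = A * (Q*K + (2*m+1)*(Q*(m+1)*(2*m+1)) + (2*m+2)*(2*m+2)*Q)"
    unfolding A_def K N by (simp add: algebra_simps)
  have e3: "A * (Q*K + (2*m+2)*B + (2*m+2)*(2*m+2)*Q) = A * (Q*K + (2*m+1)*B + (2*m+2)*(2*m+2)*Q) + A * B"
    by (simp add: algebra_simps)
  have "A * (Q*K + (2*m+1)*B + (2*m+2)*(2*m+2)*Q) + A * B \<le> A * (Q*K + (2*m+1)*(Q*(m+1)*(2*m+1)) + (2*m+2)*(2*m+2)*Q) + A * B"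
    using 3 e1 e2 e3 by linarith
  then have "A * (Q*K + (2*m+1)*B + (2*m+2)*(2*m+2)*Q) \<le> A * (Q*K + (2*m+1)*(Q*(m+1)*(2*m+1)) + (2*m+2)*(2*m+2)*Q)"
    by simp
  then have "Q*K + (2*m+1)*B + (2*m+2)*(2*m+2)*Q \<le> Q*K + (2*m+1)*(Q*(m+1)*(2*m+1)) + (2*m+2)*(2*m+2)*Q"
    using A0 by simp
  then have "(2*m+1)*B \<le> (2*m+1)*(Q*(m+1)*(2*m+1))" by simp
  then show ?thesis by (metis nat_mult_le_cancel_disj add_gr_0 zero_less_one)
qed

lemma arith2:
  fixes m SX SY K Q N :: nat
  assumes 1: "SX + (2*m+1) * (Q * (m+1) * (2*m+1)) = (2*m+1) * (Q * K)"
    and 2: "SY = (2*m+1) * (Q * (m+1) * (2*m+1)) + (2*m+2)*(2*m+1) * Q"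
    and K: "K = (m+1)*(2*m+1)*(4*m*m+10*m+7)" and N: "N = 2*(m+1)*(m+1)"
  shows "(2*m+2) * SX + (2*m+2)*(2*m+2) * SY = (2*m+1)*(2*m+3) * ((2*m+2)*(2*m+2) * (Q * N))"
proof -
  define A where "A = (2*m+2)*(2*m+1)"
  define B where "B = Q * (m+1) * (2*m+1)"
  have e1: "(2*m+2) * SX + (2*m+2)*(2*m+2) * SY + A * B = A * (Q*K + (2*m+2)*B + (2*m+2)*(2*m+2)*Q)"
  proof -
    have "(2*m+2) * SX + (2*m+2)*(2*m+2) * SY + A * B = (2*m+2) * (SX + (2*m+1) * B) + (2*m+2)*(2*m+2) * SY"
      unfolding A_def by (simp add: algebra_simps)
    also have "\<dots> = A * (Q*K + (2*m+2)*B + (2*m+2)*(2*m+2)*Q)"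
      unfolding B_def 1 2 A_def by (simp add: algebra_simps)
    finally show ?thesis .
  qed
  have e2: "(2*m+1)*(2*m+3) * ((2*m+2)*(2*m+2) * (Q * N)) + A * B = A * (Q*K + (2*m+2)*B + (2*m+2)*(2*m+2)*Q)"
    unfolding A_def B_def K N by (simp add: algebra_simps)
  show ?thesis using e1 e2 by linarith
qed

context arcctx begin

lemma term_le:
  assumes v: "v \<in> Vk" and a0: "a0 \<noteq> 0" "dot a0 (p0 v) = 0"
  shows "CARD('a) * card {u\<in>Vk. dot a0 (p0 u) = 0 \<and> \<not> par (p0 u) (p0 v)}
       + CARD('a)^2 * card {u\<in>Vk. \<exists>c. p0 u = smul c (p0 v) \<and> dot a0 (p1 u) = \<sigma> c * dot a0 (p1 v)}
       \<le> CARD('a)^2 * (QQ * nn)"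
proof -
  let ?S = "{a1. dot a1 (sv \<sigma> (p0 v)) = - dot a0 (p1 v)}"
  have v0: "p0 v \<noteq> 0" using v Vk_free by blast
  have "(\<Sum>a1\<in>?S. cL a0 a1) \<le> of_nat (card ?S) * (QQ * nn)"
    by (rule sum_bounded_above) (rule cL_le[OF a0(1)])
  also have "card ?S = CARD('a)^2" by (rule card_dot1) (simp add: v0)
  finally show ?thesis unfolding sum_lines[OF assms] by simp
qed

lemma B_le: assumes v: "v \<in> Vk" shows "Bc (p0 v) \<le> MM"
proof -
  let ?W = "{a0. a0 \<noteq> 0 \<and> dot a0 (p0 v) = 0}"
  let ?X = "\<lambda>a0. card {u\<in>Vk. dot a0 (p0 u) = 0 \<and> \<not> par (p0 u) (p0 v)}"
  let ?Y = "\<lambda>a0. card {u\<in>Vk. \<exists>c. p0 u = smul c (p0 v) \<and> dot a0 (p1 u) = \<sigma> c * dot a0 (p1 v)}"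
  have v0: "p0 v \<noteq> 0" using v Vk_free by blast
  have "(\<Sum>a0\<in>?W. CARD('a) * ?X a0 + CARD('a)^2 * ?Y a0) \<le> of_nat (card ?W) * (CARD('a)^2 * (QQ * nn))"
    by (rule sum_bounded_above) (use term_le[OF v] in auto)
  also have "card ?W = (2*m+1)*(2*m+3)" using card_nz_dot1[OF v0] q2 by simp
  finally have 1: "CARD('a) * (\<Sum>a0\<in>?W. ?X a0) + CARD('a)^2 * (\<Sum>a0\<in>?W. ?Y a0) \<le> (2*m+1)*(2*m+3) * (CARD('a)^2 * (QQ * nn))"
    by (simp add: sum.distrib sum_distrib_left)
  have q22: "CARD('a)^2 = (2*m+2)*(2*m+2)" unfolding qm by (simp add: power2_eq_square)
  have 3: "(2*m+2) * (\<Sum>a0\<in>?W. ?X a0) + (2*m+2)*(2*m+2) * (\<Sum>a0\<in>?W. ?Y a0) \<le> (2*m+1)*(2*m+3) * ((2*m+2)*(2*m+2) * (QQ * nn))"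
  proof -
    have q22': "(2*m+2)^2 = (2*m+2)*(2*m+2)" by (simp add: power2_eq_square)
    show ?thesis using 1[unfolded qm q22'] .
  qed
  have 2: "(\<Sum>a0\<in>?W. ?X a0) + (2*m+1) * Bc (p0 v) = (2*m+1) * (QQ * kk)"
    using sumX[OF v] card_Vk by simp
  have "Bc (p0 v) \<le> QQ * (m+1) * (2*m+1)"
    by (rule arith1[OF 2 sumY[OF v] 3 kkm nnm])
  then show ?thesis unfolding MM_def .
qed

lemma Bc_par:
  assumes v: "v \<in> Vk" and x: "par (p0 v) x"
  shows "Bc x = Bc (p0 v)"
proof -
  have v0: "p0 v \<noteq> 0" using v Vk_free by blast
  have xv: "par x (p0 v)" using par_sym[OF v0 x] .
  have "{u\<in>Vk. par (p0 u) x} = {u\<in>Vk. par (p0 u) (p0 v)}"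
    using par_trans xv x by blast
  then show ?thesis unfolding Bc_def by simp
qed

lemma Bc_le: "Bc x \<le> MM"
proof (cases "{u\<in>Vk. par (p0 u) x} = {}")
  case True then show ?thesis unfolding Bc_def True by simp
next
  case False
  then obtain v where v: "v \<in> Vk" "par (p0 v) x" by blast
  then show ?thesis using Bc_par B_le by simp
qed

lemma Bc_eq: assumes x: "x \<noteq> 0" shows "Bc x = MM"
proof -
  let ?NZ = "{x::'a v3. x \<noteq> 0}"
  have fin: "finite ?NZ" by simp
  have "(\<Sum>x\<in>?NZ. Bc x) = (\<Sum>x\<in>?NZ. card {u\<in>Vk. par (p0 u) x})" unfolding Bc_def ..
  also have "\<dots> = (\<Sum>u\<in>Vk. card {x\<in>?NZ. par (p0 u) x})" by (rule double_count) simp_all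
  also have "\<dots> = (\<Sum>u\<in>Vk. 2*m+1)"
  proof (rule sum.cong[OF refl])
    fix u assume "u \<in> Vk"
    then have "p0 u \<noteq> 0" using Vk_free by blast
    then have "card {y. y \<noteq> 0 \<and> par (p0 u) y} = 2*m+1" using card_par'[of "p0 u"] q1 by simp
    then show "card {x\<in>?NZ. par (p0 u) x} = 2*m+1" by simp
  qed
  also have "\<dots> = card Vk * (2*m+1)" by simp
  also have "\<dots> = (\<Sum>x\<in>?NZ. MM)"
  proof -
    have "card ?NZ = (2*m+1)*(4*m*m+10*m+7)" using card_nz[where 'a='a] q3 by simp
    then have "(\<Sum>x\<in>?NZ. MM) = (2*m+1)*(4*m*m+10*m+7) * MM" by simp
    also have "\<dots> = card Vk * (2*m+1)" unfolding card_Vk kkm MM_def by (simp add: algebra_simps)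
    finally show ?thesis by simp
  qed
  finally have "(\<Sum>x\<in>?NZ. Bc x) = (\<Sum>x\<in>?NZ. MM)" .
  then show ?thesis by (rule sum_mono_inv) (use Bc_le x in auto)
qed

end

lemma cancel_odd: assumes h: "(2*m+1) * (a::nat) = (2*m+1) * b" shows "a = b"
proof -
  have nz: "2*m+1 \<noteq> (0::nat)" by simp
  show ?thesis using mult_left_cancel[OF nz] h by blast
qed

lemma arith_sub: assumes "(a::nat) = b + c" "a = (2*m+1)*(2*m+3)" "c = 2*m+1" shows "b = (2*m+1)*(2*m+2)"
  using assms by (simp add: algebra_simps)

lemma cancel_sq:
  fixes m M y Z :: nat
  assumes "(2*m+2) * ((2*m+2) * M) + (2*m+2)*(2*m+2) * y = (2*m+2)*(2*m+2) * Z"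
  shows "M + y = Z"
proof -
  have "(2*m+2)*(2*m+2) * (M + y) = (2*m+2)*(2*m+2) * Z"
    using assms by (simp add: algebra_simps)
  moreover have nz: "(2*m+2)*(2*m+2) \<noteq> (0::nat)" by simp
  ultimately show ?thesis using mult_left_cancel[OF nz] by blast
qed

context arcctx begin

lemma q22: "CARD('a)^2 = (2*m+2)*(2*m+2)" unfolding qm by (simp add: power2_eq_square)

lemma term_eq:
  assumes v: "v \<in> Vk" and a0: "a0 \<noteq> 0" "dot a0 (p0 v) = 0"
  shows "CARD('a) * card {u\<in>Vk. dot a0 (p0 u) = 0 \<and> \<not> par (p0 u) (p0 v)}
       + CARD('a)^2 * card {u\<in>Vk. \<exists>c. p0 u = smul c (p0 v) \<and> dot a0 (p1 u) = \<sigma> c * dot a0 (p1 v)}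
       = CARD('a)^2 * (QQ * nn)"
proof -
  let ?W = "{a0. a0 \<noteq> 0 \<and> dot a0 (p0 v) = 0}"
  let ?X = "\<lambda>a0. card {u\<in>Vk. dot a0 (p0 u) = 0 \<and> \<not> par (p0 u) (p0 v)}"
  let ?Y = "\<lambda>a0. card {u\<in>Vk. \<exists>c. p0 u = smul c (p0 v) \<and> dot a0 (p1 u) = \<sigma> c * dot a0 (p1 v)}"
  have v0: "p0 v \<noteq> 0" using v Vk_free by blast
  have B: "Bc (p0 v) = QQ * (m+1) * (2*m+1)" using Bc_eq[OF v0] MM_def by simp
  have 1: "(\<Sum>a0\<in>?W. ?X a0) + (2*m+1) * (QQ * (m+1) * (2*m+1)) = (2*m+1) * (QQ * kk)"
    using sumX[OF v] card_Vk B by simp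
  have 2: "(\<Sum>a0\<in>?W. ?Y a0) = (2*m+1) * (QQ * (m+1) * (2*m+1)) + (2*m+2)*(2*m+1) * QQ"
    using sumY[OF v] B by simp
  have 3: "(2*m+2) * (\<Sum>a0\<in>?W. ?X a0) + (2*m+2)*(2*m+2) * (\<Sum>a0\<in>?W. ?Y a0) = (2*m+1)*(2*m+3) * ((2*m+2)*(2*m+2) * (QQ * nn))"
    by (rule arith2[OF 1 2 kkm nnm])
  have cW: "card ?W = (2*m+1)*(2*m+3)" using card_nz_dot1[OF v0] q2 by simp
  have "(\<Sum>a0\<in>?W. CARD('a) * ?X a0 + CARD('a)^2 * ?Y a0) = CARD('a) * (\<Sum>a0\<in>?W. ?X a0) + CARD('a)^2 * (\<Sum>a0\<in>?W. ?Y a0)"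
    by (simp add: sum.distrib sum_distrib_left)
  also have "\<dots> = (2*m+2) * (\<Sum>a0\<in>?W. ?X a0) + (2*m+2)*(2*m+2) * (\<Sum>a0\<in>?W. ?Y a0)"
    unfolding q22 unfolding qm ..
  also have "\<dots> = (\<Sum>a0\<in>?W. CARD('a)^2 * (QQ * nn))"
    unfolding 3 using cW q22 by simp
  finally have S: "(\<Sum>a0\<in>?W. CARD('a) * ?X a0 + CARD('a)^2 * ?Y a0) = (\<Sum>a0\<in>?W. CARD('a)^2 * (QQ * nn))" .
  show ?thesis
    by (rule sum_mono_inv[OF S]) (use term_le[OF v] a0 in auto)
qed

lemma line_full:
  assumes v: "v \<in> Vk" and a0: "a0 \<noteq> 0" and vK: "v \<in> Ker a0 a1"
  shows "cL a0 a1 = QQ * nn"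
proof -
  let ?S = "{a1. dot a1 (sv \<sigma> (p0 v)) = - dot a0 (p1 v)}"
  have v0: "p0 v \<noteq> 0" using v Vk_free by blast
  have d0: "dot a0 (p0 v) = 0" using vK unfolding Ker_def by blast
  have a1S: "a1 \<in> ?S" using vK unfolding Ker_def by (auto simp: eq_neg_iff_add_eq_0 add.commute)
  have cS: "card ?S = CARD('a)^2" by (rule card_dot1) (simp add: v0)
  have "(\<Sum>a1\<in>?S. cL a0 a1) = CARD('a)^2 * (QQ * nn)"
    unfolding sum_lines[OF v a0 d0] term_eq[OF v a0 d0] ..
  also have "\<dots> = (\<Sum>a1\<in>?S. QQ * nn)" using cS by simp
  finally have S: "(\<Sum>a1\<in>?S. cL a0 a1) = (\<Sum>a1\<in>?S. QQ * nn)" .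
  show ?thesis
    by (rule sum_mono_inv[OF S]) (use cL_le[OF a0] a1S in auto)
qed

lemma X_val:
  assumes v: "v \<in> Vk" and a0: "a0 \<noteq> 0" "dot a0 (p0 v) = 0"
  shows "card {u\<in>Vk. dot a0 (p0 u) = 0 \<and> \<not> par (p0 u) (p0 v)} = (2*m+2) * MM"
proof -
  let ?Xs = "{x. x \<noteq> 0 \<and> dot a0 x = 0 \<and> \<not> par x (p0 v)}"
  let ?Xu = "{u\<in>Vk. dot a0 (p0 u) = 0 \<and> \<not> par (p0 u) (p0 v)}"
  have v0: "p0 v \<noteq> 0" using v Vk_free by blast
  have fin: "finite Vk" by simp
  have "(\<Sum>x\<in>?Xs. Bc x) = (\<Sum>x\<in>?Xs. card {u\<in>Vk. par (p0 u) x})" unfolding Bc_def ..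
  also have "\<dots> = (\<Sum>u\<in>Vk. card {x\<in>?Xs. par (p0 u) x})" by (rule double_count) simp_all
  also have "\<dots> = (\<Sum>u\<in>Vk. if u \<in> ?Xu then 2*m+1 else 0)"
  proof (rule sum.cong[OF refl])
    fix u assume u: "u \<in> Vk"
    have u0: "p0 u \<noteq> 0" using u Vk_free by blast
    have eq: "x \<in> ?Xs \<longleftrightarrow> (x \<noteq> 0 \<and> u \<in> ?Xu)" if px: "x \<noteq> 0" "par (p0 u) x" for x
    proof -
      obtain c where c: "p0 u = smul c x" using px unfolding par_def by blast
      have c0: "c \<noteq> 0" using c u0 by auto
      have "dot a0 (p0 u) = c * dot a0 x" using c by (simp add: dot_smul_right)
      then have d: "dot a0 (p0 u) = 0 \<longleftrightarrow> dot a0 x = 0" using c0 by simp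
      have xu: "par x (p0 u)" using par_sym[OF u0 px(2)] .
      have p: "par x (p0 v) \<longleftrightarrow> par (p0 u) (p0 v)" using par_trans px(2) xu by blast
      show ?thesis using d p u px by blast
    qed
    show "card {x\<in>?Xs. par (p0 u) x} = (if u \<in> ?Xu then 2*m+1 else 0)"
    proof (cases "u \<in> ?Xu")
      case True
      then have "{x\<in>?Xs. par (p0 u) x} = {y. y \<noteq> 0 \<and> par (p0 u) y}" using eq by blast
      then show ?thesis using True card_par'[OF u0] q1 by simp
    next
      case False
      then have "{x\<in>?Xs. par (p0 u) x} = {}" using eq by blast
      then show ?thesis using False by (simp only: card.empty if_False)
    qed
  qed
  also have "\<dots> = (2*m+1) * card ?Xu" by (rule sum_indicator[OF fin]) blast
  finally have 1: "(\<Sum>x\<in>?Xs. Bc x) = (2*m+1) * card ?Xu" .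
  have cXs: "card ?Xs = (2*m+1)*(2*m+2)"
  proof -
    let ?A = "{x. x \<noteq> 0 \<and> dot a0 x = 0}"
    let ?Bs = "{x. x \<noteq> 0 \<and> par x (p0 v)}"
    have sub: "?Bs \<subseteq> ?A" using a0(2) unfolding par_def by (auto simp: dot_smul_right)
    have "?Xs = ?A - ?Bs" by blast
    moreover have "card ?A = card (?A - ?Bs) + card ?Bs"
      using card_Diff_subset[OF _ sub] card_mono[OF _ sub] by simp
    ultimately have "card ?A = card ?Xs + card ?Bs" by simp
    moreover have "card ?A = (2*m+1)*(2*m+3)"
    proof -
      have "?A = {a. a \<noteq> 0 \<and> dot a a0 = 0}" by (simp add: dot_comm)
      then show ?thesis using card_nz_dot1[OF a0(1)] q2 by simp
    qed
    moreover have "card ?Bs = 2*m+1" using card_par[OF v0] q1 by simp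
    ultimately show ?thesis by (rule arith_sub)
  qed
  have "(\<Sum>x\<in>?Xs. Bc x) = (\<Sum>x\<in>?Xs. MM)" by (rule sum.cong[OF refl]) (simp add: Bc_eq)
  also have "\<dots> = card ?Xs * MM" by (simp only: sum_constant of_nat_id)
  also have "\<dots> = (2*m+1) * ((2*m+2) * MM)" unfolding cXs by (simp add: algebra_simps)
  finally have F: "(\<Sum>x\<in>?Xs. Bc x) = (2*m+1) * ((2*m+2) * MM)" .
  have "(2*m+1) * card ?Xu = (2*m+1) * ((2*m+2) * MM)" by (rule trans[OF sym[OF 1] F])
  then show ?thesis by (rule cancel_odd)
qed

lemma Y_val:
  assumes v: "v \<in> Vk" and a0: "a0 \<noteq> 0" "dot a0 (p0 v) = 0"
  shows "card {u\<in>Vk. \<exists>c. p0 u = smul c (p0 v) \<and> dot a0 (p1 u) = \<sigma> c * dot a0 (p1 v)} = QQ * (m+1)"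
proof -
  define y where "y = card {u\<in>Vk. \<exists>c. p0 u = smul c (p0 v) \<and> dot a0 (p1 u) = \<sigma> c * dot a0 (p1 v)}"
  have e: "CARD('a) * ((2*m+2) * MM) + CARD('a)^2 * y = CARD('a)^2 * (QQ * nn)"
    using term_eq[OF assms] X_val[OF assms] unfolding y_def by simp
  have "(2*m+2) * ((2*m+2) * MM) + (2*m+2)*(2*m+2) * y = (2*m+2)*(2*m+2) * (QQ * nn)"
    using e unfolding q22 unfolding qm .
  then have "MM + y = QQ * nn" by (rule cancel_sq)
  moreover have "QQ * nn = MM + QQ * (m+1)" unfolding MM_def nnm by (simp add: algebra_simps)
  ultimately show ?thesis unfolding y_def[symmetric] by simp
qed

end

lemma arith_x:
  fixes QQ m b1 mm e :: nat
  assumes Q0: "QQ > 0"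
    and 1: "b1 + mm = QQ*(m+1)*(2*m+1)"
    and 2: "QQ*(m+1)*e = (2*m+1)*b1 + (2*m+1)*(2*m+3)*mm"
    and 3: "mm = 0 \<or> mm = QQ"
  shows "even ((2*m+1)*(2*m+3) - e)"
proof -
  have nz: "QQ*(m+1) \<noteq> 0" using Q0 by simp
  from 3 show ?thesis
  proof
    assume m0: "mm = 0"
    then have "QQ*(m+1)*e = QQ*(m+1)*((2*m+1)*(2*m+1))" using 1 2 by (simp add: algebra_simps)
    then have e: "e = (2*m+1)*(2*m+1)" using mult_left_cancel[OF nz] by blast
    have "(2*m+1)*(2*m+3) = (2*m+1)*(2*m+1) + 2*(2*m+1)" by (simp add: algebra_simps)
    then have "(2*m+1)*(2*m+3) - e = 2*(2*m+1)" unfolding e by simp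
    then show ?thesis by simp
  next
    assume mQ: "mm = QQ"
    have "QQ*(m+1)*e + (2*m+1)*QQ = (2*m+1)*(b1 + QQ) + (2*m+1)*(2*m+3)*QQ"
      using 2 mQ by (simp add: algebra_simps)
    also have "\<dots> = QQ*(m+1)*((2*m+1)*(2*m+3)) + (2*m+1)*QQ"
      using 1 mQ by (simp add: algebra_simps)
    finally have "QQ*(m+1)*e = QQ*(m+1)*((2*m+1)*(2*m+3))" by simp
    then have e: "e = (2*m+1)*(2*m+3)" using mult_left_cancel[OF nz] by blast
    then show ?thesis by simp
  qed
qed

lemma arith_l:
  fixes QQ m cl e :: nat
  assumes Q0: "QQ > 0"
    and 2: "QQ*(m+1)*e = (2*m+1)*cl"
    and 3: "cl = 0 \<or> cl = QQ*(2*(m+1)*(m+1))"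
  shows "odd ((2*m+1)*(2*m+3) - e)"
proof -
  have nz: "QQ*(m+1) \<noteq> 0" using Q0 by simp
  from 3 show ?thesis
  proof
    assume "cl = 0"
    then have "QQ*(m+1)*e = QQ*(m+1)*0" using 2 by simp
    then have e: "e = 0" using mult_left_cancel[OF nz] by blast
    have "odd ((2*m+1)*(2*m+3))" by simp
    then show ?thesis unfolding e by simp
  next
    assume "cl = QQ*(2*(m+1)*(m+1))"
    then have "QQ*(m+1)*e = QQ*(m+1)*((2*m+1)*(2*m+2))" using 2 by (simp add: algebra_simps)
    then have e: "e = (2*m+1)*(2*m+2)" using mult_left_cancel[OF nz] by blast
    have "(2*m+1)*(2*m+3) = (2*m+1)*(2*m+2) + (2*m+1)" by (simp add: algebra_simps)
    then have "(2*m+1)*(2*m+3) - e = 2*m+1" unfolding e by simp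
    then show ?thesis by simp
  qed
qed

context arcctx begin

definition D where "D x a0 = {u\<in>Vk. par (p0 u) x \<and> dot a0 (p1 u) = 0}"

lemma QQ_pos: "QQ > 0" unfolding QQm by simp

lemma D_card:
  assumes x: "x \<noteq> 0" and a0: "a0 \<noteq> 0" "dot a0 x = 0" and ne: "D x a0 \<noteq> {}"
  shows "card (D x a0) = QQ*(m+1)"
proof -
  obtain v where v: "v \<in> Vk" "par (p0 v) x" "dot a0 (p1 v) = 0" using ne unfolding D_def by blast
  have v0: "p0 v \<noteq> 0" using v Vk_free by blast
  have d0: "dot a0 (p0 v) = 0" using v(2) a0(2) unfolding par_def by (auto simp: dot_smul_right)
  have xv: "par x (p0 v)" using par_sym[OF v0 v(2)] .
  have "{u\<in>Vk. \<exists>c. p0 u = smul c (p0 v) \<and> dot a0 (p1 u) = \<sigma> c * dot a0 (p1 v)} = D x a0"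
  proof -
    have "(\<exists>c. p0 u = smul c (p0 v)) \<longleftrightarrow> par (p0 u) x" for u
      using par_trans v(2) xv unfolding par_def[symmetric] by blast
    then show ?thesis unfolding D_def v(3) by auto
  qed
  then show ?thesis using Y_val[OF v(1) a0(1) d0] by simp
qed

lemma D_cases: "x \<noteq> 0 \<Longrightarrow> a0 \<noteq> 0 \<Longrightarrow> dot a0 x = 0 \<Longrightarrow> card (D x a0) = (if D x a0 = {} then 0 else QQ*(m+1))"
  using D_card by auto

lemma fib_x:
  assumes x: "x \<noteq> 0"
  shows "fib (range (vscale \<sigma> (mk x 0))) = {u. p0 u \<noteq> 0 \<and> par (p0 u) x \<and> par (p1 u) x}"
proof -
  have "fib (range (vscale \<sigma> (mk x 0))) = {u. \<exists>c. c \<noteq> 0 \<and> p0 u = smul c x \<and> par (p1 u - smul (\<sigma> c) 0) x}"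
    using fib_v[of "mk x 0"] x by simp
  also have "\<dots> = {u. p0 u \<noteq> 0 \<and> par (p0 u) x \<and> par (p1 u) x}"
    using x unfolding par_def by (auto simp: smul_eq_0)
  finally show ?thesis .
qed

lemma mm_cases:
  assumes x: "x \<noteq> 0"
  shows "card {u\<in>Vk. par (p0 u) x \<and> par (p1 u) x} = 0 \<or> card {u\<in>Vk. par (p0 u) x \<and> par (p1 u) x} = QQ"
proof (cases "range (vscale \<sigma> (mk x 0)) \<in> K")
  case True
  have "{u\<in>Vk. par (p0 u) x \<and> par (p1 u) x} = {u. p0 u \<noteq> 0 \<and> par (p0 u) x \<and> par (p1 u) x}"
  proof (intro set_eqI iffI)
    fix u assume "u \<in> {u\<in>Vk. par (p0 u) x \<and> par (p1 u) x}"
    then show "u \<in> {u. p0 u \<noteq> 0 \<and> par (p0 u) x \<and> par (p1 u) x}" using Vk_free by blast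
  next
    fix u assume u: "u \<in> {u. p0 u \<noteq> 0 \<and> par (p0 u) x \<and> par (p1 u) x}"
    then have "u \<in> fib (range (vscale \<sigma> (mk x 0)))" unfolding fib_x[OF x] .
    then have "p0 u \<noteq> 0" "range (vscale \<sigma> u) = range (vscale \<sigma> (mk x 0))" unfolding fib_def by blast+
    then have "u \<in> Vk" using True unfolding Vk_def by simp
    then show "u \<in> {u\<in>Vk. par (p0 u) x \<and> par (p1 u) x}" using u by blast
  qed
  also have "\<dots> = fib (range (vscale \<sigma> (mk x 0)))" using fib_x[OF x] by simp
  finally have "{u\<in>Vk. par (p0 u) x \<and> par (p1 u) x} = fib (range (vscale \<sigma> (mk x 0)))" .
  then show ?thesis using card_fib_v[of "mk x 0"] x by simp
next
  case False
  have "{u\<in>Vk. par (p0 u) x \<and> par (p1 u) x} = {}"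
  proof -
    have "u \<notin> Vk" if "p0 u \<noteq> 0" "par (p0 u) x" "par (p1 u) x" for u
    proof -
      have "u \<in> fib (range (vscale \<sigma> (mk x 0)))" unfolding fib_x[OF x] using that by blast
      then have "range (vscale \<sigma> u) = range (vscale \<sigma> (mk x 0))" unfolding fib_def by blast
      then show ?thesis using False unfolding Vk_def by auto
    qed
    then show ?thesis using Vk_free by blast
  qed
  then show ?thesis by simp
qed

lemma fact_x:
  assumes x: "x \<noteq> 0"
  shows "even (card {a0. a0 \<noteq> 0 \<and> dot a0 x = 0 \<and> D x a0 = {}})"
proof -
  let ?W = "{a0. a0 \<noteq> 0 \<and> dot a0 x = 0}"
  let ?Ne = "{a0\<in>?W. D x a0 \<noteq> {}}"
  let ?F = "{u\<in>Vk. par (p0 u) x \<and> par (p1 u) x}"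
  let ?G = "{u\<in>Vk. par (p0 u) x \<and> \<not> par (p1 u) x}"
  have fin: "finite Vk" by simp
  have cW: "card ?W = (2*m+1)*(2*m+3)" using card_nz_dot1[OF x] q2 by simp
  have "(\<Sum>a0\<in>?W. card (D x a0)) = (\<Sum>a0\<in>?W. card {u\<in>Vk. par (p0 u) x \<and> dot a0 (p1 u) = 0})"
    unfolding D_def ..
  also have "\<dots> = (\<Sum>u\<in>Vk. card {a0\<in>?W. par (p0 u) x \<and> dot a0 (p1 u) = 0})"
    by (rule double_count) simp_all
  also have "\<dots> = (\<Sum>u\<in>Vk. (if u \<in> ?G then 2*m+1 else 0) + (if u \<in> ?F then (2*m+1)*(2*m+3) else 0))"
  proof (rule sum.cong[OF refl])
    fix u assume u: "u \<in> Vk"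
    show "card {a0\<in>?W. par (p0 u) x \<and> dot a0 (p1 u) = 0} = (if u \<in> ?G then 2*m+1 else 0) + (if u \<in> ?F then (2*m+1)*(2*m+3) else 0)"
    proof (cases "par (p0 u) x")
      case False
      then have 1: "{a0\<in>?W. par (p0 u) x \<and> dot a0 (p1 u) = 0} = {}" by blast
      have nG: "u \<notin> ?G" using False by blast
      have nF: "u \<notin> ?F" using False by blast
      show ?thesis by (simp only: 1 nG nF if_False card.empty add_0)
    next
      case True
      show ?thesis
      proof (cases "par (p1 u) x")
        case True2: True
        then obtain d where d: "p1 u = smul d x" unfolding par_def by blast
        have "{a0\<in>?W. par (p0 u) x \<and> dot a0 (p1 u) = 0} = ?W"
          using True d by (auto simp: dot_smul_right)
        then have 1: "card {a0\<in>?W. par (p0 u) x \<and> dot a0 (p1 u) = 0} = (2*m+1)*(2*m+3)" using cW by simp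
        have nG: "u \<notin> ?G" using True2 by blast
        have iF: "u \<in> ?F" using True True2 u by blast
        show ?thesis by (simp only: 1 nG iF if_False if_True add_0)
      next
        case False
        have "{a0\<in>?W. par (p0 u) x \<and> dot a0 (p1 u) = 0} = {a0. a0 \<noteq> 0 \<and> dot a0 x = 0 \<and> dot a0 (p1 u) = 0}"
          using True by blast
        then have 1: "card {a0\<in>?W. par (p0 u) x \<and> dot a0 (p1 u) = 0} = 2*m+1"
          using card_nz_dot2[OF x False] q1 by simp
        have iG: "u \<in> ?G" using True False u by blast
        have nF: "u \<notin> ?F" using False by blast
        show ?thesis by (simp only: 1 iG nF if_False if_True add_0)
      qed
    qed
  qed
  also have "\<dots> = (\<Sum>u\<in>Vk. if u \<in> ?G then 2*m+1 else 0) + (\<Sum>u\<in>Vk. if u \<in> ?F then (2*m+1)*(2*m+3) else 0)"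
    by (rule sum.distrib)
  also have "\<dots> = (2*m+1) * card ?G + (2*m+1)*(2*m+3) * card ?F"
  proof -
    have s1: "?G \<subseteq> Vk" by blast
    have s2: "?F \<subseteq> Vk" by blast
    show ?thesis by (simp only: sum_indicator[OF fin s1] sum_indicator[OF fin s2])
  qed
  finally have S1: "(\<Sum>a0\<in>?W. card (D x a0)) = (2*m+1) * card ?G + (2*m+1)*(2*m+3) * card ?F" .
  have "(\<Sum>a0\<in>?W. card (D x a0)) = (\<Sum>a0\<in>?W. if a0 \<in> ?Ne then QQ*(m+1) else 0)"
    by (rule sum.cong[OF refl]) (use D_cases x in auto)
  also have "\<dots> = QQ*(m+1) * card ?Ne" by (rule sum_indicator) auto
  finally have S2: "(\<Sum>a0\<in>?W. card (D x a0)) = QQ*(m+1) * card ?Ne" .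
  have GF: "card ?G + card ?F = QQ*(m+1)*(2*m+1)"
  proof -
    have "card {u\<in>{u\<in>Vk. par (p0 u) x}. par (p1 u) x} + card {u\<in>{u\<in>Vk. par (p0 u) x}. \<not> par (p1 u) x} = card {u\<in>Vk. par (p0 u) x}"
      by (rule card_split) simp
    moreover have "card {u\<in>Vk. par (p0 u) x} = MM" using Bc_eq[OF x] unfolding Bc_def .
    moreover have "{u\<in>{u\<in>Vk. par (p0 u) x}. par (p1 u) x} = ?F" by blast
    moreover have "{u\<in>{u\<in>Vk. par (p0 u) x}. \<not> par (p1 u) x} = ?G" by blast
    ultimately show ?thesis unfolding MM_def by simp
  qed
  have ev: "even ((2*m+1)*(2*m+3) - card ?Ne)"
    by (rule arith_x[OF QQ_pos GF _ mm_cases[OF x]]) (use S1 S2 in simp)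
  have "{a0. a0 \<noteq> 0 \<and> dot a0 x = 0 \<and> D x a0 = {}} = ?W - ?Ne" by blast
  moreover have "card (?W - ?Ne) = card ?W - card ?Ne" by (rule card_Diff_subset) auto
  ultimately show ?thesis using ev cW by simp
qed

lemma fact_l:
  assumes a0: "a0 \<noteq> 0"
  shows "odd (card {x. x \<noteq> 0 \<and> dot a0 x = 0 \<and> D x a0 = {}})"
proof -
  let ?X = "{x. x \<noteq> 0 \<and> dot a0 x = 0}"
  let ?Ne = "{x\<in>?X. D x a0 \<noteq> {}}"
  let ?L = "{u\<in>Vk. u \<in> Ker a0 0}"
  have fin: "finite Vk" by simp
  have cX: "card ?X = (2*m+1)*(2*m+3)"
  proof -
    have "?X = {a. a \<noteq> 0 \<and> dot a a0 = 0}" by (simp add: dot_comm)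
    then show ?thesis using card_nz_dot1[OF a0] q2 by simp
  qed
  have "(\<Sum>x\<in>?X. card (D x a0)) = (\<Sum>x\<in>?X. card {u\<in>Vk. par (p0 u) x \<and> dot a0 (p1 u) = 0})"
    unfolding D_def ..
  also have "\<dots> = (\<Sum>u\<in>Vk. card {x\<in>?X. par (p0 u) x \<and> dot a0 (p1 u) = 0})"
    by (rule double_count) simp_all
  also have "\<dots> = (\<Sum>u\<in>Vk. if u \<in> ?L then 2*m+1 else 0)"
  proof (rule sum.cong[OF refl])
    fix u assume u: "u \<in> Vk"
    have u0: "p0 u \<noteq> 0" using u Vk_free by blast
    have eq: "dot a0 x = 0 \<longleftrightarrow> dot a0 (p0 u) = 0" if xn: "x \<noteq> 0" and px: "par (p0 u) x" for x
    proof -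
      obtain c where c: "p0 u = smul c x" using px unfolding par_def by blast
      have "c \<noteq> 0" using c u0 by auto
      moreover have "dot a0 (p0 u) = c * dot a0 x" using c by (simp add: dot_smul_right)
      ultimately show ?thesis by simp
    qed
    have kerL: "u \<in> Ker a0 0 \<longleftrightarrow> dot a0 (p0 u) = 0 \<and> dot a0 (p1 u) = 0"
      unfolding Ker_def by simp
    show "card {x\<in>?X. par (p0 u) x \<and> dot a0 (p1 u) = 0} = (if u \<in> ?L then 2*m+1 else 0)"
    proof (cases "u \<in> ?L")
      case True
      then have "{x\<in>?X. par (p0 u) x \<and> dot a0 (p1 u) = 0} = {y. y \<noteq> 0 \<and> par (p0 u) y}"
        using eq kerL by blast
      then show ?thesis using True card_par'[OF u0] q1 by simp
    next
      case False
      then have "{x\<in>?X. par (p0 u) x \<and> dot a0 (p1 u) = 0} = {}"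
        using eq kerL u by blast
      then show ?thesis using False by (simp only: card.empty if_False)
    qed
  qed
  also have "\<dots> = (2*m+1) * card ?L" by (rule sum_indicator[OF fin]) blast
  finally have S1: "(\<Sum>x\<in>?X. card (D x a0)) = (2*m+1) * cL a0 0"
    unfolding cL_def by (simp add: Int_def)
  have "(\<Sum>x\<in>?X. card (D x a0)) = (\<Sum>x\<in>?X. if x \<in> ?Ne then QQ*(m+1) else 0)"
    by (rule sum.cong[OF refl]) (use D_cases a0 in auto)
  also have "\<dots> = QQ*(m+1) * card ?Ne" by (rule sum_indicator) auto
  finally have S2: "(\<Sum>x\<in>?X. card (D x a0)) = QQ*(m+1) * card ?Ne" .
  have cl: "cL a0 0 = 0 \<or> cL a0 0 = QQ*(2*(m+1)*(m+1))"
  proof (cases "Vk \<inter> Ker a0 0 = {}")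
    case True then show ?thesis unfolding cL_def by simp
  next
    case False
    then obtain v where "v \<in> Vk" "v \<in> Ker a0 0" by blast
    then have "cL a0 0 = QQ * nn" using line_full a0 by blast
    then show ?thesis unfolding nnm by simp
  qed
  have od: "odd ((2*m+1)*(2*m+3) - card ?Ne)"
    by (rule arith_l[OF QQ_pos _ cl]) (use S1 S2 in simp)
  have "{x. x \<noteq> 0 \<and> dot a0 x = 0 \<and> D x a0 = {}} = ?X - ?Ne" by blast
  moreover have "card (?X - ?Ne) = card ?X - card ?Ne" by (rule card_Diff_subset) auto
  ultimately show ?thesis using od cX by simp
qed

lemma contradiction: False
proof -
  let ?NZ = "{x::'a v3. x \<noteq> 0}"
  let ?f = "\<lambda>x. card {a0\<in>?NZ. dot a0 x = 0 \<and> D x a0 = {}}"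
  let ?g = "\<lambda>a0. card {x\<in>?NZ. dot a0 x = 0 \<and> D x a0 = {}}"
  have fin: "finite ?NZ" by simp
  have eq: "(\<Sum>x\<in>?NZ. ?f x) = (\<Sum>a0\<in>?NZ. ?g a0)"
    by (rule double_count) simp_all
  have fx: "even (?f x)" if "x \<in> ?NZ" for x
  proof -
    have "{a0\<in>?NZ. dot a0 x = 0 \<and> D x a0 = {}} = {a0. a0 \<noteq> 0 \<and> dot a0 x = 0 \<and> D x a0 = {}}" by blast
    then show ?thesis using fact_x that by simp
  qed
  have gl: "odd (?g a0)" if "a0 \<in> ?NZ" for a0
  proof -
    have "{x\<in>?NZ. dot a0 x = 0 \<and> D x a0 = {}} = {x. x \<noteq> 0 \<and> dot a0 x = 0 \<and> D x a0 = {}}" by blast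
    then show ?thesis using fact_l that by simp
  qed
  have "even (\<Sum>x\<in>?NZ. ?f x)"
  proof -
    have z: "{x\<in>?NZ. odd (?f x)} = {}" using fx by blast
    have e: "even (\<Sum>x\<in>?NZ. ?f x) \<longleftrightarrow> even (card {x\<in>?NZ. odd (?f x)})" by (rule even_sum_iff[OF fin])
    show ?thesis unfolding e z by simp
  qed
  moreover have "odd (\<Sum>a0\<in>?NZ. ?g a0)"
  proof -
    have z: "{a0\<in>?NZ. odd (?g a0)} = ?NZ" using gl by blast
    have o: "odd (card ?NZ)" using card_nz[where 'a='a] q3 by simp
    have e: "even (\<Sum>a0\<in>?NZ. ?g a0) \<longleftrightarrow> even (card {a0\<in>?NZ. odd (?g a0)})" by (rule even_sum_iff[OF fin])
    show ?thesis unfolding e z using o .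
  qed
  ultimately show False using eq by simp
qed

end

theorem theorem3p12:
  fixes \<sigma> :: "'a::{field,finite} \<Rightarrow> 'a" and r :: nat
  assumes "r \<ge> 1" and "card (UNIV :: 'a set) = 2 ^ r" and "field_aut \<sigma>"
  shows "\<not> (\<exists>K. proj_arc \<sigma> K ((card (UNIV :: 'a set) ^ 4 - card (UNIV :: 'a set)) div 2) (card (UNIV :: 'a set) ^ 2 div 2))"
proof
  assume "\<exists>K. proj_arc \<sigma> K ((card (UNIV :: 'a set) ^ 4 - card (UNIV :: 'a set)) div 2) (card (UNIV :: 'a set) ^ 2 div 2)"
  then obtain K where K: "proj_arc \<sigma> K ((card (UNIV :: 'a set) ^ 4 - card (UNIV :: 'a set)) div 2) (card (UNIV :: 'a set) ^ 2 div 2)"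
    by blast
  have q: "card (UNIV :: 'a set) = 2 * 2 ^ (r - 1)"
    using assms(1,2) by (metis Suc_diff_1 less_le_trans power_Suc zero_less_one)
  interpret A: arcctx \<sigma> K "2 ^ (r - 1)"
    by unfold_locales (use assms(3) q K in auto)
  show False by (rule A.contradiction)
qed

end
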